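(* Let $\mathbf K$ be an M$\Delta$C, let $\operatorname{Rad}\mathbf K$ be its prime radical and $\mathbf N=\{A\in\mathbf K: A^{\otimes n}\cong0\text{ for some }n\ge1\}$. Then: (a) $\operatorname{Rad}\mathbf K\subseteq\mathbf N$; (b) if $\mathbf K$ has at least one completely prime ideal, then $\operatorname{Rad}\mathbf K\subseteq\mathbf N\subseteq\operatorname{CP\text{-}Rad}\mathbf K$; (c) if $\mathbf K$ is symmetric monoidal, then $\operatorname{Rad}\mathbf K=\mathbf N=\operatorname{CP\text{-}Rad}\mathbf K$.
   Context: M$\Delta$C: triangulated category with monoidal structure $(\otimes,\mathbf 1)$, $\otimes$ exact in each variable. Thick ideal: full triangulated subcategory closed under summands and two-sided tensoring with arbitrary objects. A prime ideal is a proper thick ideal $\mathbf P$ with $\mathbf I\otimes\mathbf J\subseteq\mathbf P\Rightarrow\mathbf I\subseteq\mathbf P$ or $\mathbf J\subseteq\mathbf P$ for thick ideals $\mathbf I,\mathbf J$; the prime radical $\operatorname{Rad}\mathbf K$ is the intersection of all prime ideals. A completely prime ideal is a proper thick ideal $\mathbf P$ such that $A\otimes B\in\mathbf P$ implies $A\in\mathbf P$ or $B\in\mathbf P$; $\operatorname{CP\text{-}Rad}\mathbf K$ is the intersection of all completely prime ideals. *)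

theory Defs
  imports Main
begin

text \<open>Morphisms live in a type 'm, objects in 'o;
  Hom X Y is the set of morphisms X -> Y. cmp g f is the composite "g after f".
  Dist is the class of distinguished triangles X -f-> Y -g-> Z -h-> shO X.
  asc A B C : (A*B)*C -> A*(B*C), lun A : 1*A -> A, run A : A*1 -> A.
  exL A B : (shO A)*B -> shO (A*B) and exR A B : A*(shO B) -> shO (A*B) are the structure
  isomorphisms making the tensor exact in each variable.\<close>

record ('o, 'm) mdc =
  Obj   :: "'o set"
  Hom   :: "'o \<Rightarrow> 'o \<Rightarrow> 'm set"
  cmp   :: "'m \<Rightarrow> 'm \<Rightarrow> 'm"
  idm   :: "'o \<Rightarrow> 'm"
  madd  :: "'m \<Rightarrow> 'm \<Rightarrow> 'm"
  mneg  :: "'m \<Rightarrow> 'm"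
  mzero :: "'o \<Rightarrow> 'o \<Rightarrow> 'm"
  shO   :: "'o \<Rightarrow> 'o"
  shM   :: "'m \<Rightarrow> 'm"
  Dist  :: "('o \<times> 'o \<times> 'o \<times> 'm \<times> 'm \<times> 'm) set"
  tenO  :: "'o \<Rightarrow> 'o \<Rightarrow> 'o"
  tenM  :: "'m \<Rightarrow> 'm \<Rightarrow> 'm"
  unitO :: "'o"
  asc   :: "'o \<Rightarrow> 'o \<Rightarrow> 'o \<Rightarrow> 'm"
  lun   :: "'o \<Rightarrow> 'm"
  run   :: "'o \<Rightarrow> 'm"
  exL   :: "'o \<Rightarrow> 'o \<Rightarrow> 'm"
  exR   :: "'o \<Rightarrow> 'o \<Rightarrow> 'm"

definition is_category :: "('o,'m) mdc \<Rightarrow> bool" where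
  "is_category K \<longleftrightarrow>
     (\<forall>X Y. (X \<notin> Obj K \<or> Y \<notin> Obj K) \<longrightarrow> Hom K X Y = {}) \<and>
     (\<forall>X \<in> Obj K. idm K X \<in> Hom K X X) \<and>
     (\<forall>X Y Z f g. f \<in> Hom K X Y \<longrightarrow> g \<in> Hom K Y Z \<longrightarrow> cmp K g f \<in> Hom K X Z) \<and>
     (\<forall>X Y f. f \<in> Hom K X Y \<longrightarrow> cmp K f (idm K X) = f \<and> cmp K (idm K Y) f = f) \<and>
     (\<forall>W X Y Z f g h. f \<in> Hom K W X \<longrightarrow> g \<in> Hom K X Y \<longrightarrow> h \<in> Hom K Y Z \<longrightarrow>
        cmp K h (cmp K g f) = cmp K (cmp K h g) f)"

definition is_iso :: "('o,'m) mdc \<Rightarrow> 'm \<Rightarrow> 'o \<Rightarrow> 'o \<Rightarrow> bool" where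
  "is_iso K f X Y \<longleftrightarrow> f \<in> Hom K X Y \<and>
     (\<exists>g \<in> Hom K Y X. cmp K g f = idm K X \<and> cmp K f g = idm K Y)"

definition isomorphic :: "('o,'m) mdc \<Rightarrow> 'o \<Rightarrow> 'o \<Rightarrow> bool" where
  "isomorphic K X Y \<longleftrightarrow> X \<in> Obj K \<and> Y \<in> Obj K \<and> (\<exists>f. is_iso K f X Y)"

definition is_preadditive :: "('o,'m) mdc \<Rightarrow> bool" where
  "is_preadditive K \<longleftrightarrow>
     (\<forall>X \<in> Obj K. \<forall>Y \<in> Obj K.
        mzero K X Y \<in> Hom K X Y \<and>
        (\<forall>f \<in> Hom K X Y. \<forall>g \<in> Hom K X Y. madd K f g \<in> Hom K X Y) \<and>
        (\<forall>f \<in> Hom K X Y. mneg K f \<in> Hom K X Y) \<and>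
        (\<forall>f \<in> Hom K X Y. \<forall>g \<in> Hom K X Y. \<forall>h \<in> Hom K X Y.
            madd K (madd K f g) h = madd K f (madd K g h)) \<and>
        (\<forall>f \<in> Hom K X Y. \<forall>g \<in> Hom K X Y. madd K f g = madd K g f) \<and>
        (\<forall>f \<in> Hom K X Y. madd K f (mzero K X Y) = f) \<and>
        (\<forall>f \<in> Hom K X Y. madd K f (mneg K f) = mzero K X Y)) \<and>
     (\<forall>X Y Z f f' g. f \<in> Hom K X Y \<longrightarrow> f' \<in> Hom K X Y \<longrightarrow> g \<in> Hom K Y Z \<longrightarrow>
        cmp K g (madd K f f') = madd K (cmp K g f) (cmp K g f')) \<and>
     (\<forall>X Y Z f g g'. f \<in> Hom K X Y \<longrightarrow> g \<in> Hom K Y Z \<longrightarrow> g' \<in> Hom K Y Z \<longrightarrow>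
        cmp K (madd K g g') f = madd K (cmp K g f) (cmp K g' f))"

definition is_zero_obj :: "('o,'m) mdc \<Rightarrow> 'o \<Rightarrow> bool" where
  "is_zero_obj K Z \<longleftrightarrow> Z \<in> Obj K \<and>
     (\<forall>X \<in> Obj K. Hom K Z X = {mzero K Z X} \<and> Hom K X Z = {mzero K X Z})"

definition is_biproduct :: "('o,'m) mdc \<Rightarrow> 'o \<Rightarrow> 'o \<Rightarrow> 'o \<Rightarrow> 'm \<Rightarrow> 'm \<Rightarrow> 'm \<Rightarrow> 'm \<Rightarrow> bool" where
  "is_biproduct K A B S i1 i2 p1 p2 \<longleftrightarrow>
     A \<in> Obj K \<and> B \<in> Obj K \<and> S \<in> Obj K \<and>
     i1 \<in> Hom K A S \<and> i2 \<in> Hom K B S \<and> p1 \<in> Hom K S A \<and> p2 \<in> Hom K S B \<and>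
     cmp K p1 i1 = idm K A \<and> cmp K p2 i2 = idm K B \<and>
     cmp K p2 i1 = mzero K A B \<and> cmp K p1 i2 = mzero K B A \<and>
     madd K (cmp K i1 p1) (cmp K i2 p2) = idm K S"

definition is_additive :: "('o,'m) mdc \<Rightarrow> bool" where
  "is_additive K \<longleftrightarrow> is_category K \<and> is_preadditive K \<and>
     (\<exists>Z. is_zero_obj K Z) \<and>
     (\<forall>A \<in> Obj K. \<forall>B \<in> Obj K. \<exists>S i1 i2 p1 p2. is_biproduct K A B S i1 i2 p1 p2)"

definition shift_ok :: "('o,'m) mdc \<Rightarrow> bool" where
  "shift_ok K \<longleftrightarrow>
     (\<forall>X \<in> Obj K. shO K X \<in> Obj K) \<and>
     (\<forall>X Y f. f \<in> Hom K X Y \<longrightarrow> shM K f \<in> Hom K (shO K X) (shO K Y)) \<and>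
     (\<forall>X \<in> Obj K. shM K (idm K X) = idm K (shO K X)) \<and>
     (\<forall>X Y Z f g. f \<in> Hom K X Y \<longrightarrow> g \<in> Hom K Y Z \<longrightarrow>
        shM K (cmp K g f) = cmp K (shM K g) (shM K f)) \<and>
     (\<forall>X Y f g. f \<in> Hom K X Y \<longrightarrow> g \<in> Hom K X Y \<longrightarrow>
        shM K (madd K f g) = madd K (shM K f) (shM K g)) \<and>
     (\<forall>X \<in> Obj K. \<forall>Y \<in> Obj K. bij_betw (shM K) (Hom K X Y) (Hom K (shO K X) (shO K Y))) \<and>
     (\<forall>Y \<in> Obj K. \<exists>X \<in> Obj K. isomorphic K (shO K X) Y)"

definition tri_typed :: "('o,'m) mdc \<Rightarrow> 'o \<Rightarrow> 'o \<Rightarrow> 'o \<Rightarrow> 'm \<Rightarrow> 'm \<Rightarrow> 'm \<Rightarrow> bool" where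
  "tri_typed K X Y Z f g h \<longleftrightarrow> f \<in> Hom K X Y \<and> g \<in> Hom K Y Z \<and> h \<in> Hom K Z (shO K X)"

definition is_triangulated :: "('o,'m) mdc \<Rightarrow> bool" where
  "is_triangulated K \<longleftrightarrow> is_additive K \<and> shift_ok K \<and>
     \<comment> \<open>distinguished triangles are triangles\<close>
     (\<forall>X Y Z f g h. (X,Y,Z,f,g,h) \<in> Dist K \<longrightarrow> tri_typed K X Y Z f g h) \<and>
     \<comment> \<open>TR1: X = X -> 0 -> shift X is distinguished\<close>
     (\<forall>X Z. X \<in> Obj K \<longrightarrow> is_zero_obj K Z \<longrightarrow>
        (X, X, Z, idm K X, mzero K X Z, mzero K Z (shO K X)) \<in> Dist K) \<and>
     \<comment> \<open>TR1: closed under isomorphisms of triangles\<close>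
     (\<forall>X Y Z f g h X' Y' Z' f' g' h' a b c.
        (X,Y,Z,f,g,h) \<in> Dist K \<longrightarrow> tri_typed K X' Y' Z' f' g' h' \<longrightarrow>
        is_iso K a X X' \<longrightarrow> is_iso K b Y Y' \<longrightarrow> is_iso K c Z Z' \<longrightarrow>
        cmp K b f = cmp K f' a \<longrightarrow> cmp K c g = cmp K g' b \<longrightarrow>
        cmp K (shM K a) h = cmp K h' c \<longrightarrow>
        (X',Y',Z',f',g',h') \<in> Dist K) \<and>
     \<comment> \<open>TR1: every morphism extends to a distinguished triangle\<close>
     (\<forall>X Y f. f \<in> Hom K X Y \<longrightarrow> (\<exists>Z g h. (X,Y,Z,f,g,h) \<in> Dist K)) \<and>
     \<comment> \<open>TR2: rotation\<close>
     (\<forall>X Y Z f g h. f \<in> Hom K X Y \<longrightarrow>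
        ((X,Y,Z,f,g,h) \<in> Dist K \<longleftrightarrow> (Y, Z, shO K X, g, h, mneg K (shM K f)) \<in> Dist K)) \<and>
     \<comment> \<open>TR3: morphisms of triangles\<close>
     (\<forall>X Y Z f g h X' Y' Z' f' g' h' a b.
        (X,Y,Z,f,g,h) \<in> Dist K \<longrightarrow> (X',Y',Z',f',g',h') \<in> Dist K \<longrightarrow>
        a \<in> Hom K X X' \<longrightarrow> b \<in> Hom K Y Y' \<longrightarrow> cmp K b f = cmp K f' a \<longrightarrow>
        (\<exists>c \<in> Hom K Z Z'. cmp K c g = cmp K g' b \<and> cmp K h' c = cmp K (shM K a) h)) \<and>
     \<comment> \<open>TR4: octahedral axiom\<close>
     (\<forall>X Y Z f g Z' u u' X' v v' Y' w w'.
        f \<in> Hom K X Y \<longrightarrow> g \<in> Hom K Y Z \<longrightarrow>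
        (X, Y, Z', f, u, u') \<in> Dist K \<longrightarrow>
        (Y, Z, X', g, v, v') \<in> Dist K \<longrightarrow>
        (X, Z, Y', cmp K g f, w, w') \<in> Dist K \<longrightarrow>
        (\<exists>a \<in> Hom K Z' Y'. \<exists>b \<in> Hom K Y' X'.
           (Z', Y', X', a, b, cmp K (shM K u) v') \<in> Dist K \<and>
           cmp K a u = cmp K w g \<and> cmp K w' a = u' \<and>
           cmp K b w = v \<and> cmp K v' b = cmp K (shM K f) w'))"

definition is_monoidal :: "('o,'m) mdc \<Rightarrow> bool" where
  "is_monoidal K \<longleftrightarrow>
     unitO K \<in> Obj K \<and>
     (\<forall>X \<in> Obj K. \<forall>Y \<in> Obj K. tenO K X Y \<in> Obj K) \<and>
     (\<forall>X Y X' Y' f f'. f \<in> Hom K X Y \<longrightarrow> f' \<in> Hom K X' Y' \<longrightarrow>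
        tenM K f f' \<in> Hom K (tenO K X X') (tenO K Y Y')) \<and>
     (\<forall>X \<in> Obj K. \<forall>Y \<in> Obj K. tenM K (idm K X) (idm K Y) = idm K (tenO K X Y)) \<and>
     (\<forall>X Y Z X' Y' Z' f g f' g'. f \<in> Hom K X Y \<longrightarrow> g \<in> Hom K Y Z \<longrightarrow>
        f' \<in> Hom K X' Y' \<longrightarrow> g' \<in> Hom K Y' Z' \<longrightarrow>
        tenM K (cmp K g f) (cmp K g' f') = cmp K (tenM K g g') (tenM K f f')) \<and>
     \<comment> \<open>associator: natural isomorphism\<close>
     (\<forall>A \<in> Obj K. \<forall>B \<in> Obj K. \<forall>C \<in> Obj K.
        is_iso K (asc K A B C) (tenO K (tenO K A B) C) (tenO K A (tenO K B C))) \<and>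
     (\<forall>X Y Z X' Y' Z' f g h. f \<in> Hom K X X' \<longrightarrow> g \<in> Hom K Y Y' \<longrightarrow> h \<in> Hom K Z Z' \<longrightarrow>
        cmp K (asc K X' Y' Z') (tenM K (tenM K f g) h) =
        cmp K (tenM K f (tenM K g h)) (asc K X Y Z)) \<and>
     \<comment> \<open>unitors: natural isomorphisms\<close>
     (\<forall>A \<in> Obj K. is_iso K (lun K A) (tenO K (unitO K) A) A \<and>
                   is_iso K (run K A) (tenO K A (unitO K)) A) \<and>
     (\<forall>X Y f. f \<in> Hom K X Y \<longrightarrow>
        cmp K (lun K Y) (tenM K (idm K (unitO K)) f) = cmp K f (lun K X) \<and>
        cmp K (run K Y) (tenM K f (idm K (unitO K))) = cmp K f (run K X)) \<and>
     \<comment> \<open>pentagon\<close>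
     (\<forall>A \<in> Obj K. \<forall>B \<in> Obj K. \<forall>C \<in> Obj K. \<forall>D \<in> Obj K.
        cmp K (tenM K (idm K A) (asc K B C D))
          (cmp K (asc K A (tenO K B C) D) (tenM K (asc K A B C) (idm K D)))
        = cmp K (asc K A B (tenO K C D)) (asc K (tenO K A B) C D)) \<and>
     \<comment> \<open>triangle identity\<close>
     (\<forall>A \<in> Obj K. \<forall>B \<in> Obj K.
        cmp K (tenM K (idm K A) (lun K B)) (asc K A (unitO K) B)
        = tenM K (run K A) (idm K B))"

definition tensor_exact :: "('o,'m) mdc \<Rightarrow> bool" where
  "tensor_exact K \<longleftrightarrow>
     (\<forall>X Y X' Y' f f' g. f \<in> Hom K X Y \<longrightarrow> f' \<in> Hom K X Y \<longrightarrow> g \<in> Hom K X' Y' \<longrightarrow>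
        tenM K (madd K f f') g = madd K (tenM K f g) (tenM K f' g) \<and>
        tenM K g (madd K f f') = madd K (tenM K g f) (tenM K g f')) \<and>
     (\<forall>A \<in> Obj K. \<forall>X \<in> Obj K.
        is_iso K (exL K X A) (tenO K (shO K X) A) (shO K (tenO K X A)) \<and>
        is_iso K (exR K A X) (tenO K A (shO K X)) (shO K (tenO K A X))) \<and>
     (\<forall>A \<in> Obj K. \<forall>X Y f. f \<in> Hom K X Y \<longrightarrow>
        cmp K (exL K Y A) (tenM K (shM K f) (idm K A)) =
          cmp K (shM K (tenM K f (idm K A))) (exL K X A) \<and>
        cmp K (exR K A Y) (tenM K (idm K A) (shM K f)) =
          cmp K (shM K (tenM K (idm K A) f)) (exR K A X)) \<and>
     (\<forall>A \<in> Obj K. \<forall>X Y Z f g h. (X,Y,Z,f,g,h) \<in> Dist K \<longrightarrow>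
        (tenO K X A, tenO K Y A, tenO K Z A, tenM K f (idm K A), tenM K g (idm K A),
           cmp K (exL K X A) (tenM K h (idm K A))) \<in> Dist K \<and>
        (tenO K A X, tenO K A Y, tenO K A Z, tenM K (idm K A) f, tenM K (idm K A) g,
           cmp K (exR K A X) (tenM K (idm K A) h)) \<in> Dist K)"

definition is_MDC :: "('o,'m) mdc \<Rightarrow> bool" where
  "is_MDC K \<longleftrightarrow> is_triangulated K \<and> is_monoidal K \<and> tensor_exact K"

definition is_symmetric :: "('o,'m) mdc \<Rightarrow> ('o \<Rightarrow> 'o \<Rightarrow> 'm) \<Rightarrow> bool" where
  "is_symmetric K br \<longleftrightarrow>
     (\<forall>A \<in> Obj K. \<forall>B \<in> Obj K. is_iso K (br A B) (tenO K A B) (tenO K B A) \<and>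
        cmp K (br B A) (br A B) = idm K (tenO K A B)) \<and>
     (\<forall>X Y X' Y' f g. f \<in> Hom K X X' \<longrightarrow> g \<in> Hom K Y Y' \<longrightarrow>
        cmp K (br X' Y') (tenM K f g) = cmp K (tenM K g f) (br X Y)) \<and>
     (\<forall>A \<in> Obj K. \<forall>B \<in> Obj K. \<forall>C \<in> Obj K.
        cmp K (asc K B C A) (cmp K (br A (tenO K B C)) (asc K A B C))
        = cmp K (tenM K (idm K B) (br A C)) (cmp K (asc K B A C) (tenM K (br A B) (idm K C))))"

definition thick_ideal :: "('o,'m) mdc \<Rightarrow> 'o set \<Rightarrow> bool" where
  "thick_ideal K P \<longleftrightarrow> P \<subseteq> Obj K \<and>
     (\<exists>Z \<in> P. is_zero_obj K Z) \<and>
     (\<forall>X Y. X \<in> P \<longrightarrow> isomorphic K X Y \<longrightarrow> Y \<in> P) \<and>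
     (\<forall>X \<in> Obj K. X \<in> P \<longleftrightarrow> shO K X \<in> P) \<and>
     (\<forall>X Y Z f g h. (X,Y,Z,f,g,h) \<in> Dist K \<longrightarrow> X \<in> P \<longrightarrow> Y \<in> P \<longrightarrow> Z \<in> P) \<and>
     (\<forall>A B S i1 i2 p1 p2. is_biproduct K A B S i1 i2 p1 p2 \<longrightarrow> S \<in> P \<longrightarrow> A \<in> P) \<and>
     (\<forall>A \<in> P. \<forall>B \<in> Obj K. tenO K A B \<in> P \<and> tenO K B A \<in> P)"

definition ideal_tensor :: "('o,'m) mdc \<Rightarrow> 'o set \<Rightarrow> 'o set \<Rightarrow> 'o set" where
  "ideal_tensor K I J = {tenO K A B | A B. A \<in> I \<and> B \<in> J}"

definition prime_ideal :: "('o,'m) mdc \<Rightarrow> 'o set \<Rightarrow> bool" where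
  "prime_ideal K P \<longleftrightarrow> thick_ideal K P \<and> P \<noteq> Obj K \<and>
     (\<forall>I J. thick_ideal K I \<longrightarrow> thick_ideal K J \<longrightarrow> ideal_tensor K I J \<subseteq> P \<longrightarrow>
        I \<subseteq> P \<or> J \<subseteq> P)"

definition completely_prime_ideal :: "('o,'m) mdc \<Rightarrow> 'o set \<Rightarrow> bool" where
  "completely_prime_ideal K P \<longleftrightarrow> thick_ideal K P \<and> P \<noteq> Obj K \<and>
     (\<forall>A \<in> Obj K. \<forall>B \<in> Obj K. tenO K A B \<in> P \<longrightarrow> A \<in> P \<or> B \<in> P)"

definition prime_radical :: "('o,'m) mdc \<Rightarrow> 'o set" where
  "prime_radical K = {A \<in> Obj K. \<forall>P. prime_ideal K P \<longrightarrow> A \<in> P}"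

definition cp_radical :: "('o,'m) mdc \<Rightarrow> 'o set" where
  "cp_radical K = {A \<in> Obj K. \<forall>P. completely_prime_ideal K P \<longrightarrow> A \<in> P}"

primrec tpow :: "('o,'m) mdc \<Rightarrow> 'o \<Rightarrow> nat \<Rightarrow> 'o" where
  "tpow K A 0 = unitO K"
| "tpow K A (Suc n) = tenO K A (tpow K A n)"

definition nilpotent_objs :: "('o,'m) mdc \<Rightarrow> 'o set" where
  "nilpotent_objs K = {A \<in> Obj K. \<exists>n\<ge>1. \<exists>Z. is_zero_obj K Z \<and> isomorphic K (tpow K A n) Z}"

end

theory Submission
  imports Defs
begin


locale M = fixes K :: "('o,'m) mdc" assumes mdc: "is_MDC K"
begin

lemma tri: "is_triangulated K" using mdc unfolding is_MDC_def by blast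
lemma addv: "is_additive K" using tri unfolding is_triangulated_def by blast
lemma cat: "is_category K" using addv unfolding is_additive_def by blast
lemma pre: "is_preadditive K" using addv unfolding is_additive_def by blast
lemma sh: "shift_ok K" using tri unfolding is_triangulated_def by blast
lemma mon: "is_monoidal K" using mdc unfolding is_MDC_def by blast
lemma tex: "tensor_exact K" using mdc unfolding is_MDC_def by blast

lemma ex_zero: "\<exists>Z. is_zero_obj K Z" using addv unfolding is_additive_def by blast

lemma hom_obj: "f \<in> Hom K X Y \<Longrightarrow> X \<in> Obj K \<and> Y \<in> Obj K"
  using cat unfolding is_category_def by blast
lemma id_hom: "X \<in> Obj K \<Longrightarrow> idm K X \<in> Hom K X X"
  using cat unfolding is_category_def by blast
lemma comp_hom: "f \<in> Hom K X Y \<Longrightarrow> g \<in> Hom K Y Z \<Longrightarrow> cmp K g f \<in> Hom K X Z"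
  using cat unfolding is_category_def by blast
lemma id_r: "f \<in> Hom K X Y \<Longrightarrow> cmp K f (idm K X) = f"
  using cat unfolding is_category_def by blast
lemma id_l: "f \<in> Hom K X Y \<Longrightarrow> cmp K (idm K Y) f = f"
  using cat unfolding is_category_def by blast
lemma cassoc: "f \<in> Hom K W X \<Longrightarrow> g \<in> Hom K X Y \<Longrightarrow> h \<in> Hom K Y Z \<Longrightarrow>
        cmp K h (cmp K g f) = cmp K (cmp K h g) f"
  using cat unfolding is_category_def by blast

lemma pre_obj: assumes "X \<in> Obj K" "Y \<in> Obj K" shows
        "mzero K X Y \<in> Hom K X Y \<and>
        (\<forall>f \<in> Hom K X Y. \<forall>g \<in> Hom K X Y. madd K f g \<in> Hom K X Y) \<and>
        (\<forall>f \<in> Hom K X Y. mneg K f \<in> Hom K X Y) \<and>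
        (\<forall>f \<in> Hom K X Y. \<forall>g \<in> Hom K X Y. \<forall>h \<in> Hom K X Y.
            madd K (madd K f g) h = madd K f (madd K g h)) \<and>
        (\<forall>f \<in> Hom K X Y. \<forall>g \<in> Hom K X Y. madd K f g = madd K g f) \<and>
        (\<forall>f \<in> Hom K X Y. madd K f (mzero K X Y) = f) \<and>
        (\<forall>f \<in> Hom K X Y. madd K f (mneg K f) = mzero K X Y)"
proof -
  have "\<forall>X \<in> Obj K. \<forall>Y \<in> Obj K.
        mzero K X Y \<in> Hom K X Y \<and>
        (\<forall>f \<in> Hom K X Y. \<forall>g \<in> Hom K X Y. madd K f g \<in> Hom K X Y) \<and>
        (\<forall>f \<in> Hom K X Y. mneg K f \<in> Hom K X Y) \<and>
        (\<forall>f \<in> Hom K X Y. \<forall>g \<in> Hom K X Y. \<forall>h \<in> Hom K X Y.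
            madd K (madd K f g) h = madd K f (madd K g h)) \<and>
        (\<forall>f \<in> Hom K X Y. \<forall>g \<in> Hom K X Y. madd K f g = madd K g f) \<and>
        (\<forall>f \<in> Hom K X Y. madd K f (mzero K X Y) = f) \<and>
        (\<forall>f \<in> Hom K X Y. madd K f (mneg K f) = mzero K X Y)"
    using pre unfolding is_preadditive_def by (rule conjunct1)
  from this assms(1) have "\<forall>Y\<in>Obj K. mzero K X Y \<in> Hom K X Y \<and>
        (\<forall>f \<in> Hom K X Y. \<forall>g \<in> Hom K X Y. madd K f g \<in> Hom K X Y) \<and>
        (\<forall>f \<in> Hom K X Y. mneg K f \<in> Hom K X Y) \<and>
        (\<forall>f \<in> Hom K X Y. \<forall>g \<in> Hom K X Y. \<forall>h \<in> Hom K X Y.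
            madd K (madd K f g) h = madd K f (madd K g h)) \<and>
        (\<forall>f \<in> Hom K X Y. \<forall>g \<in> Hom K X Y. madd K f g = madd K g f) \<and>
        (\<forall>f \<in> Hom K X Y. madd K f (mzero K X Y) = f) \<and>
        (\<forall>f \<in> Hom K X Y. madd K f (mneg K f) = mzero K X Y)" by (rule bspec)
  from this assms(2) show ?thesis by (rule bspec)
qed

lemma zero_hom: "X \<in> Obj K \<Longrightarrow> Y \<in> Obj K \<Longrightarrow> mzero K X Y \<in> Hom K X Y"
  using pre_obj by blast
lemma add_hom: "f \<in> Hom K X Y \<Longrightarrow> g \<in> Hom K X Y \<Longrightarrow> madd K f g \<in> Hom K X Y"
  using pre_obj[OF conjunct1[OF hom_obj] conjunct2[OF hom_obj]] by blast
lemma neg_hom: "f \<in> Hom K X Y \<Longrightarrow> mneg K f \<in> Hom K X Y"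
  using pre_obj[OF conjunct1[OF hom_obj] conjunct2[OF hom_obj]] by blast
lemma add_assoc: "f \<in> Hom K X Y \<Longrightarrow> g \<in> Hom K X Y \<Longrightarrow> h \<in> Hom K X Y \<Longrightarrow>
   madd K (madd K f g) h = madd K f (madd K g h)"
  using pre_obj[OF conjunct1[OF hom_obj] conjunct2[OF hom_obj]] by blast
lemma add_zero: "f \<in> Hom K X Y \<Longrightarrow> madd K f (mzero K X Y) = f"
  using pre_obj[OF conjunct1[OF hom_obj] conjunct2[OF hom_obj]] by blast
lemma add_neg: "f \<in> Hom K X Y \<Longrightarrow> madd K f (mneg K f) = mzero K X Y"
  using pre_obj[OF conjunct1[OF hom_obj] conjunct2[OF hom_obj]] by blast
lemma dist_l: "f \<in> Hom K X Y \<Longrightarrow> f' \<in> Hom K X Y \<Longrightarrow> g \<in> Hom K Y Z \<Longrightarrow>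
        cmp K g (madd K f f') = madd K (cmp K g f) (cmp K g f')"
proof -
  have "\<forall>X Y Z f f' g. f \<in> Hom K X Y \<longrightarrow> f' \<in> Hom K X Y \<longrightarrow> g \<in> Hom K Y Z \<longrightarrow>
        cmp K g (madd K f f') = madd K (cmp K g f) (cmp K g f')"
    using pre unfolding is_preadditive_def by (rule conjunct1[OF conjunct2])
  thus "f \<in> Hom K X Y \<Longrightarrow> f' \<in> Hom K X Y \<Longrightarrow> g \<in> Hom K Y Z \<Longrightarrow> ?thesis" by blast
qed
lemma dist_r: "f \<in> Hom K X Y \<Longrightarrow> g \<in> Hom K Y Z \<Longrightarrow> g' \<in> Hom K Y Z \<Longrightarrow>
        cmp K (madd K g g') f = madd K (cmp K g f) (cmp K g' f)"
proof -
  have "\<forall>X Y Z f g g'. f \<in> Hom K X Y \<longrightarrow> g \<in> Hom K Y Z \<longrightarrow> g' \<in> Hom K Y Z \<longrightarrow>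
        cmp K (madd K g g') f = madd K (cmp K g f) (cmp K g' f)"
    using pre unfolding is_preadditive_def by (rule conjunct2[OF conjunct2])
  thus "f \<in> Hom K X Y \<Longrightarrow> g \<in> Hom K Y Z \<Longrightarrow> g' \<in> Hom K Y Z \<Longrightarrow> ?thesis" by blast
qed

lemma cancel: assumes x: "x \<in> Hom K A B" and e: "madd K x x = x" shows "x = mzero K A B"
proof -
  have "mzero K A B = madd K x (mneg K x)" using add_neg[OF x] by simp
  also have "\<dots> = madd K (madd K x x) (mneg K x)" using e by simp
  also have "\<dots> = madd K x (madd K x (mneg K x))" using add_assoc[OF x x neg_hom[OF x]] .
  also have "\<dots> = x" using add_neg[OF x] add_zero[OF x] by simp
  finally show ?thesis by simp
qed

lemma zz: "X \<in> Obj K \<Longrightarrow> Y \<in> Obj K \<Longrightarrow> madd K (mzero K X Y) (mzero K X Y) = mzero K X Y"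
  using add_zero zero_hom by blast

lemma comp_zero_r: assumes f: "f \<in> Hom K Y W" and X: "X \<in> Obj K"
  shows "cmp K f (mzero K X Y) = mzero K X W"
proof -
  have Y: "Y \<in> Obj K" "W \<in> Obj K" using hom_obj[OF f] by auto
  have m: "mzero K X Y \<in> Hom K X Y" using zero_hom X Y by auto
  have "cmp K f (mzero K X Y) = cmp K f (madd K (mzero K X Y) (mzero K X Y))" using zz X Y by simp
  also have "\<dots> = madd K (cmp K f (mzero K X Y)) (cmp K f (mzero K X Y))" using dist_l[OF m m f] .
  finally show ?thesis using cancel comp_hom[OF m f] by metis
qed

lemma comp_zero_l: assumes g: "g \<in> Hom K X Y" and W: "W \<in> Obj K"
  shows "cmp K (mzero K Y W) g = mzero K X W"
proof -
  have Y: "Y \<in> Obj K" "X \<in> Obj K" using hom_obj[OF g] by auto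
  have m: "mzero K Y W \<in> Hom K Y W" using zero_hom W Y by auto
  have "cmp K (mzero K Y W) g = cmp K (madd K (mzero K Y W) (mzero K Y W)) g" using zz W Y by simp
  also have "\<dots> = madd K (cmp K (mzero K Y W) g) (cmp K (mzero K Y W) g)" using dist_r[OF g m m] .
  finally show ?thesis using cancel comp_hom[OF g m] by metis
qed

lemma zero_id: "is_zero_obj K Z \<Longrightarrow> idm K Z = mzero K Z Z"
  using id_hom unfolding is_zero_obj_def by blast

lemma zero_homL: "is_zero_obj K Z \<Longrightarrow> f \<in> Hom K Z X \<Longrightarrow> f = mzero K Z X"
  using hom_obj unfolding is_zero_obj_def by blast
lemma zero_homR: "is_zero_obj K Z \<Longrightarrow> f \<in> Hom K X Z \<Longrightarrow> f = mzero K X Z"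
  using hom_obj unfolding is_zero_obj_def by blast

lemma id_zero: assumes A: "A \<in> Obj K" and e: "idm K A = mzero K A A" shows "is_zero_obj K A"
  unfolding is_zero_obj_def
proof (intro conjI ballI A)
  fix X assume X: "X \<in> Obj K"
  show "Hom K A X = {mzero K A X}"
  proof
    show "Hom K A X \<subseteq> {mzero K A X}"
    proof
      fix f assume f: "f \<in> Hom K A X"
      have "f = cmp K f (idm K A)" using id_r[OF f] by simp
      also have "\<dots> = mzero K A X" using e comp_zero_r[OF f A] by simp
      finally show "f \<in> {mzero K A X}" by simp
    qed
    show "{mzero K A X} \<subseteq> Hom K A X" using zero_hom A X by auto
  qed
  show "Hom K X A = {mzero K X A}"
  proof
    show "Hom K X A \<subseteq> {mzero K X A}"
    proof
      fix f assume f: "f \<in> Hom K X A"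
      have "f = cmp K (idm K A) f" using id_l[OF f] by simp
      also have "\<dots> = mzero K X A" using e comp_zero_l[OF f A] by simp
      finally show "f \<in> {mzero K X A}" by simp
    qed
    show "{mzero K X A} \<subseteq> Hom K X A" using zero_hom A X by auto
  qed
qed

lemma iso_refl: "X \<in> Obj K \<Longrightarrow> isomorphic K X X"
  unfolding isomorphic_def is_iso_def using id_hom id_l by metis

lemma iso_sym: "isomorphic K X Y \<Longrightarrow> isomorphic K Y X"
  unfolding isomorphic_def is_iso_def by metis

lemma is_iso_comp: assumes f: "is_iso K f X Y" and g: "is_iso K g Y Z"
  shows "is_iso K (cmp K g f) X Z"
proof -
  obtain f' where f': "f' \<in> Hom K Y X" "cmp K f' f = idm K X" "cmp K f f' = idm K Y"
    and fh: "f \<in> Hom K X Y" using f unfolding is_iso_def by blast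
  obtain g' where g': "g' \<in> Hom K Z Y" "cmp K g' g = idm K Y" "cmp K g g' = idm K Z"
    and gh: "g \<in> Hom K Y Z" using g unfolding is_iso_def by blast
  have "cmp K (cmp K f' g') (cmp K g f) = cmp K f' (cmp K g' (cmp K g f))"
    using cassoc comp_hom fh gh f'(1) g'(1) by metis
  also have "\<dots> = cmp K f' (cmp K (cmp K g' g) f)" using cassoc fh gh g'(1) by metis
  also have "\<dots> = idm K X" using g'(2) id_l[OF fh] f'(2) by simp
  finally have 1: "cmp K (cmp K f' g') (cmp K g f) = idm K X" .
  have "cmp K (cmp K g f) (cmp K f' g') = cmp K g (cmp K f (cmp K f' g'))"
    using cassoc comp_hom fh gh f'(1) g'(1) by metis
  also have "\<dots> = cmp K g (cmp K (cmp K f f') g')" using cassoc f'(1) fh g'(1) by metis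
  also have "\<dots> = idm K Z" using f'(3) id_l[OF g'(1)] g'(3) by simp
  finally have 2: "cmp K (cmp K g f) (cmp K f' g') = idm K Z" .
  show ?thesis unfolding is_iso_def using 1 2 comp_hom fh gh f'(1) g'(1) by blast
qed

lemma iso_trans: "isomorphic K X Y \<Longrightarrow> isomorphic K Y Z \<Longrightarrow> isomorphic K X Z"
  unfolding isomorphic_def using is_iso_comp by blast

lemma is_iso_isomorphic: "is_iso K f X Y \<Longrightarrow> isomorphic K X Y"
  unfolding isomorphic_def is_iso_def using hom_obj by blast

lemma zeros_iso: assumes Z: "is_zero_obj K Z" and Z': "is_zero_obj K Z'" shows "isomorphic K Z Z'"
proof -
  have o: "Z \<in> Obj K" "Z' \<in> Obj K" using Z Z' unfolding is_zero_obj_def by auto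
  have a: "cmp K (mzero K Z' Z) (mzero K Z Z') = idm K Z"
    using zero_homL[OF Z] comp_hom zero_hom o zero_id[OF Z] by metis
  have b: "cmp K (mzero K Z Z') (mzero K Z' Z) = idm K Z'"
    using zero_homL[OF Z'] comp_hom zero_hom o zero_id[OF Z'] by metis
  show ?thesis unfolding isomorphic_def is_iso_def using a b o zero_hom by blast
qed

lemma zero_iso_closed: assumes Z: "is_zero_obj K Z" and i: "isomorphic K Z Y" shows "is_zero_obj K Y"
proof -
  obtain f g where f: "f \<in> Hom K Z Y" and g: "g \<in> Hom K Y Z" and e: "cmp K f g = idm K Y"
    using i unfolding isomorphic_def is_iso_def by blast
  have Y: "Y \<in> Obj K" using hom_obj[OF f] by auto
  have "f = mzero K Z Y" using zero_homL[OF Z f] .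
  hence "idm K Y = mzero K Y Y" using e comp_zero_l[OF g Y] by simp
  thus ?thesis using id_zero Y by blast
qed

end




definition exfun :: "('o,'m) mdc \<Rightarrow> ('o \<Rightarrow> 'o) \<Rightarrow> ('m \<Rightarrow> 'm) \<Rightarrow> bool" where
  "exfun K F Fm \<longleftrightarrow> (\<forall>X\<in>Obj K. F X \<in> Obj K) \<and>
    (\<forall>X Y f. f \<in> Hom K X Y \<longrightarrow> Fm f \<in> Hom K (F X) (F Y)) \<and>
    (\<forall>X\<in>Obj K. Fm (idm K X) = idm K (F X)) \<and>
    (\<forall>X Y Z f g. f \<in> Hom K X Y \<longrightarrow> g \<in> Hom K Y Z \<longrightarrow> Fm (cmp K g f) = cmp K (Fm g) (Fm f)) \<and>
    (\<forall>X Y f g. f \<in> Hom K X Y \<longrightarrow> g \<in> Hom K X Y \<longrightarrow> Fm (madd K f g) = madd K (Fm f) (Fm g)) \<and>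
    (\<forall>X\<in>Obj K. isomorphic K (F (shO K X)) (shO K (F X))) \<and>
    (\<forall>X Y Z f g h. (X,Y,Z,f,g,h) \<in> Dist K \<longrightarrow> (\<exists>f' g' h'. (F X, F Y, F Z, f', g', h') \<in> Dist K))"

definition thick_sub :: "('o,'m) mdc \<Rightarrow> 'o set \<Rightarrow> bool" where
  "thick_sub K P \<longleftrightarrow> P \<subseteq> Obj K \<and>
     (\<exists>Z \<in> P. is_zero_obj K Z) \<and>
     (\<forall>X Y. X \<in> P \<longrightarrow> isomorphic K X Y \<longrightarrow> Y \<in> P) \<and>
     (\<forall>X \<in> Obj K. X \<in> P \<longleftrightarrow> shO K X \<in> P) \<and>
     (\<forall>X Y Z f g h. (X,Y,Z,f,g,h) \<in> Dist K \<longrightarrow> X \<in> P \<longrightarrow> Y \<in> P \<longrightarrow> Z \<in> P) \<and>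
     (\<forall>A B S i1 i2 p1 p2. is_biproduct K A B S i1 i2 p1 p2 \<longrightarrow> S \<in> P \<longrightarrow> A \<in> P)"

lemma thick_ideal_sub: "thick_ideal K P \<longleftrightarrow> thick_sub K P \<and>
     (\<forall>A \<in> P. \<forall>B \<in> Obj K. tenO K A B \<in> P \<and> tenO K B A \<in> P)"
  unfolding thick_ideal_def thick_sub_def by blast

context M begin

lemma sh_obj: "X \<in> Obj K \<Longrightarrow> shO K X \<in> Obj K" using sh unfolding shift_ok_def by blast
lemma sh_hom: "f \<in> Hom K X Y \<Longrightarrow> shM K f \<in> Hom K (shO K X) (shO K Y)" using sh unfolding shift_ok_def by blast
lemma sh_id: "X \<in> Obj K \<Longrightarrow> shM K (idm K X) = idm K (shO K X)" using sh unfolding shift_ok_def by blast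
lemma sh_bij: "X \<in> Obj K \<Longrightarrow> Y \<in> Obj K \<Longrightarrow> bij_betw (shM K) (Hom K X Y) (Hom K (shO K X) (shO K Y))"
  using sh unfolding shift_ok_def by blast

lemma dist_typed: "(X,Y,Z,f,g,h) \<in> Dist K \<Longrightarrow> f \<in> Hom K X Y \<and> g \<in> Hom K Y Z \<and> h \<in> Hom K Z (shO K X)"
proof -
  have "\<forall>X Y Z f g h. (X,Y,Z,f,g,h) \<in> Dist K \<longrightarrow> tri_typed K X Y Z f g h"
    using tri unfolding is_triangulated_def by (rule conjunct1[OF conjunct2[OF conjunct2]])
  thus "(X,Y,Z,f,g,h) \<in> Dist K \<Longrightarrow> ?thesis" unfolding tri_typed_def by blast
qed
lemma TR1: "X \<in> Obj K \<Longrightarrow> is_zero_obj K Z \<Longrightarrow>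
        (X, X, Z, idm K X, mzero K X Z, mzero K Z (shO K X)) \<in> Dist K"
proof -
  have "\<forall>X Z. X \<in> Obj K \<longrightarrow> is_zero_obj K Z \<longrightarrow>
        (X, X, Z, idm K X, mzero K X Z, mzero K Z (shO K X)) \<in> Dist K"
    using tri unfolding is_triangulated_def by (rule conjunct1[OF conjunct2[OF conjunct2[OF conjunct2]]])
  thus "X \<in> Obj K \<Longrightarrow> is_zero_obj K Z \<Longrightarrow> ?thesis" by blast
qed
lemma TR2: "f \<in> Hom K X Y \<Longrightarrow> (X,Y,Z,f,g,h) \<in> Dist K \<Longrightarrow> (Y, Z, shO K X, g, h, mneg K (shM K f)) \<in> Dist K"
proof -
  have "\<forall>X Y Z f g h. f \<in> Hom K X Y \<longrightarrow>
        ((X,Y,Z,f,g,h) \<in> Dist K \<longleftrightarrow> (Y, Z, shO K X, g, h, mneg K (shM K f)) \<in> Dist K)"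
    using tri unfolding is_triangulated_def
    by (rule conjunct1[OF conjunct2[OF conjunct2[OF conjunct2[OF conjunct2[OF conjunct2[OF conjunct2]]]]]])
  thus "f \<in> Hom K X Y \<Longrightarrow> (X,Y,Z,f,g,h) \<in> Dist K \<Longrightarrow> ?thesis" by blast
qed
lemma TR3: "(X,Y,Z,f,g,h) \<in> Dist K \<Longrightarrow> (X',Y',Z',f',g',h') \<in> Dist K \<Longrightarrow>
        a \<in> Hom K X X' \<Longrightarrow> b \<in> Hom K Y Y' \<Longrightarrow> cmp K b f = cmp K f' a \<Longrightarrow>
        (\<exists>c \<in> Hom K Z Z'. cmp K c g = cmp K g' b \<and> cmp K h' c = cmp K (shM K a) h)"
proof -
  have "\<forall>X Y Z f g h X' Y' Z' f' g' h' a b.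
        (X,Y,Z,f,g,h) \<in> Dist K \<longrightarrow> (X',Y',Z',f',g',h') \<in> Dist K \<longrightarrow>
        a \<in> Hom K X X' \<longrightarrow> b \<in> Hom K Y Y' \<longrightarrow> cmp K b f = cmp K f' a \<longrightarrow>
        (\<exists>c \<in> Hom K Z Z'. cmp K c g = cmp K g' b \<and> cmp K h' c = cmp K (shM K a) h)"
    using tri unfolding is_triangulated_def
    by (rule conjunct1[OF conjunct2[OF conjunct2[OF conjunct2[OF conjunct2[OF conjunct2[OF conjunct2[OF conjunct2]]]]]]])
  thus "(X,Y,Z,f,g,h) \<in> Dist K \<Longrightarrow> (X',Y',Z',f',g',h') \<in> Dist K \<Longrightarrow>
        a \<in> Hom K X X' \<Longrightarrow> b \<in> Hom K Y Y' \<Longrightarrow> cmp K b f = cmp K f' a \<Longrightarrow> ?thesis" by blast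
qed

lemma shift_zero1: assumes Z: "is_zero_obj K X" shows "is_zero_obj K (shO K X)"
proof -
  have X: "X \<in> Obj K" using Z unfolding is_zero_obj_def by auto
  have SX: "shO K X \<in> Obj K" using sh_obj X by auto
  have "Hom K (shO K X) (shO K X) = shM K ` Hom K X X" using sh_bij[OF X X] unfolding bij_betw_def by auto
  also have "\<dots> = {shM K (mzero K X X)}" using Z X unfolding is_zero_obj_def by auto
  finally have "idm K (shO K X) = mzero K (shO K X) (shO K X)"
    using id_hom[OF SX] zero_hom[OF SX SX] by auto
  thus ?thesis using id_zero SX by blast
qed

lemma shift_zero2: assumes X: "X \<in> Obj K" and Z: "is_zero_obj K (shO K X)" shows "is_zero_obj K X"
proof -
  have SX: "shO K X \<in> Obj K" using sh_obj X by auto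
  have i: "inj_on (shM K) (Hom K X X)" using sh_bij[OF X X] unfolding bij_betw_def by auto
  have "shM K (idm K X) = shM K (mzero K X X)"
    using sh_id[OF X] zero_id[OF Z] zero_homL[OF Z sh_hom[OF zero_hom[OF X X]]] by simp
  hence "idm K X = mzero K X X" using i id_hom[OF X] zero_hom[OF X X] inj_on_def by metis
  thus ?thesis using id_zero X by blast
qed

lemma dist_zero: assumes D: "(X,Y,Z,f,g,h) \<in> Dist K" and ZX: "is_zero_obj K X" and ZY: "is_zero_obj K Y"
  shows "is_zero_obj K Z"
proof -
  have f: "f \<in> Hom K X Y" and g: "g \<in> Hom K Y Z" and h: "h \<in> Hom K Z (shO K X)" using dist_typed[OF D] by auto
  have Z: "Z \<in> Obj K" using hom_obj[OF g] by auto
  have SZ: "shO K Z \<in> Obj K" using sh_obj Z by auto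
  have SX: "is_zero_obj K (shO K X)" and SY: "is_zero_obj K (shO K Y)" using shift_zero1 ZX ZY by auto
  have D1: "(Z, shO K X, shO K Y, h, mneg K (shM K f), mneg K (shM K g)) \<in> Dist K"
    using TR2[OF g TR2[OF f D]] .
  obtain Z0 where Z0: "is_zero_obj K Z0" using ex_zero by blast
  have Z0o: "Z0 \<in> Obj K" using Z0 unfolding is_zero_obj_def by auto
  have SXo: "shO K X \<in> Obj K" using SX unfolding is_zero_obj_def by auto
  have SYo: "shO K Y \<in> Obj K" using SY unfolding is_zero_obj_def by auto
  have D0: "(Z, Z0, shO K Z, mzero K Z Z0, mzero K Z0 (shO K Z), mneg K (shM K (idm K Z))) \<in> Dist K"
    using TR2[OF id_hom[OF Z] TR1[OF Z Z0]] .
  have b: "mzero K Z0 (shO K X) \<in> Hom K Z0 (shO K X)" using zero_hom Z0o SXo by auto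
  have eq: "cmp K (mzero K Z0 (shO K X)) (mzero K Z Z0) = cmp K h (idm K Z)"
    using zero_homR[OF SX comp_hom[OF zero_hom[OF Z Z0o] b]] zero_homR[OF SX comp_hom[OF id_hom[OF Z] h]] by simp
  obtain c where c: "c \<in> Hom K (shO K Z) (shO K Y)"
    and e: "cmp K (mneg K (shM K g)) c = cmp K (shM K (idm K Z)) (mneg K (shM K (idm K Z)))"
    using TR3[OF D0 D1 id_hom[OF Z] b eq] by blast
  have c0: "c = mzero K (shO K Z) (shO K Y)" using zero_homR[OF SY c] .
  have ng: "mneg K (shM K g) \<in> Hom K (shO K Y) (shO K Z)" using neg_hom sh_hom g by blast
  have L: "cmp K (mneg K (shM K g)) c = mzero K (shO K Z) (shO K Z)"
    using comp_zero_r[OF ng SZ] c0 by simp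
  have ih: "idm K (shO K Z) \<in> Hom K (shO K Z) (shO K Z)" using id_hom SZ by auto
  have R: "cmp K (shM K (idm K Z)) (mneg K (shM K (idm K Z))) = mneg K (idm K (shO K Z))"
    using sh_id[OF Z] id_l[OF neg_hom[OF ih]] by simp
  have "idm K (shO K Z) = madd K (idm K (shO K Z)) (mzero K (shO K Z) (shO K Z))" using add_zero[OF ih] by simp
  also have "\<dots> = madd K (idm K (shO K Z)) (mneg K (idm K (shO K Z)))" using L R e by simp
  also have "\<dots> = mzero K (shO K Z) (shO K Z)" using add_neg[OF ih] .
  finally have "is_zero_obj K (shO K Z)" using id_zero SZ by blast
  thus ?thesis using shift_zero2 Z by blast
qed

end



context M begin

lemma unit_obj: "unitO K \<in> Obj K" using mon unfolding is_monoidal_def by blast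
lemma ten_obj: "X \<in> Obj K \<Longrightarrow> Y \<in> Obj K \<Longrightarrow> tenO K X Y \<in> Obj K"
proof -
  have "\<forall>X \<in> Obj K. \<forall>Y \<in> Obj K. tenO K X Y \<in> Obj K" using mon unfolding is_monoidal_def by (elim conjE) assumption
  thus "X \<in> Obj K \<Longrightarrow> Y \<in> Obj K \<Longrightarrow> ?thesis" by blast
qed
lemma tenM_hom: "f \<in> Hom K X Y \<Longrightarrow> f' \<in> Hom K X' Y' \<Longrightarrow> tenM K f f' \<in> Hom K (tenO K X X') (tenO K Y Y')"
proof -
  have "\<forall>X Y X' Y' f f'. f \<in> Hom K X Y \<longrightarrow> f' \<in> Hom K X' Y' \<longrightarrow>
        tenM K f f' \<in> Hom K (tenO K X X') (tenO K Y Y')" using mon unfolding is_monoidal_def by (elim conjE) assumption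
  thus "f \<in> Hom K X Y \<Longrightarrow> f' \<in> Hom K X' Y' \<Longrightarrow> ?thesis" by blast
qed
lemma tenM_id: "X \<in> Obj K \<Longrightarrow> Y \<in> Obj K \<Longrightarrow> tenM K (idm K X) (idm K Y) = idm K (tenO K X Y)"
proof -
  have "\<forall>X \<in> Obj K. \<forall>Y \<in> Obj K. tenM K (idm K X) (idm K Y) = idm K (tenO K X Y)"
    using mon unfolding is_monoidal_def by (elim conjE) assumption
  thus "X \<in> Obj K \<Longrightarrow> Y \<in> Obj K \<Longrightarrow> ?thesis" by blast
qed
lemma tenM_comp: "f \<in> Hom K X Y \<Longrightarrow> g \<in> Hom K Y Z \<Longrightarrow>
        f' \<in> Hom K X' Y' \<Longrightarrow> g' \<in> Hom K Y' Z' \<Longrightarrow>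
        tenM K (cmp K g f) (cmp K g' f') = cmp K (tenM K g g') (tenM K f f')"
proof -
  have "\<forall>X Y Z X' Y' Z' f g f' g'. f \<in> Hom K X Y \<longrightarrow> g \<in> Hom K Y Z \<longrightarrow>
        f' \<in> Hom K X' Y' \<longrightarrow> g' \<in> Hom K Y' Z' \<longrightarrow>
        tenM K (cmp K g f) (cmp K g' f') = cmp K (tenM K g g') (tenM K f f')"
    using mon unfolding is_monoidal_def by (elim conjE) assumption
  thus "f \<in> Hom K X Y \<Longrightarrow> g \<in> Hom K Y Z \<Longrightarrow>
        f' \<in> Hom K X' Y' \<Longrightarrow> g' \<in> Hom K Y' Z' \<Longrightarrow> ?thesis" by blast
qed
lemma asc_iso: "A \<in> Obj K \<Longrightarrow> B \<in> Obj K \<Longrightarrow> C \<in> Obj K \<Longrightarrow>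
        is_iso K (asc K A B C) (tenO K (tenO K A B) C) (tenO K A (tenO K B C))"
proof -
  have "\<forall>A \<in> Obj K. \<forall>B \<in> Obj K. \<forall>C \<in> Obj K.
        is_iso K (asc K A B C) (tenO K (tenO K A B) C) (tenO K A (tenO K B C))"
    using mon unfolding is_monoidal_def by (elim conjE) assumption
  thus "A \<in> Obj K \<Longrightarrow> B \<in> Obj K \<Longrightarrow> C \<in> Obj K \<Longrightarrow> ?thesis" by blast
qed
lemma lun_iso: "A \<in> Obj K \<Longrightarrow> is_iso K (lun K A) (tenO K (unitO K) A) A"
proof -
  have "\<forall>A \<in> Obj K. is_iso K (lun K A) (tenO K (unitO K) A) A \<and>
                   is_iso K (run K A) (tenO K A (unitO K)) A"
    using mon unfolding is_monoidal_def by (elim conjE) assumption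
  thus "A \<in> Obj K \<Longrightarrow> ?thesis" by blast
qed

lemma tenM_add: "f \<in> Hom K X Y \<Longrightarrow> f' \<in> Hom K X Y \<Longrightarrow> g \<in> Hom K X' Y' \<Longrightarrow>
        tenM K (madd K f f') g = madd K (tenM K f g) (tenM K f' g) \<and>
        tenM K g (madd K f f') = madd K (tenM K g f) (tenM K g f')"
proof -
  have "\<forall>X Y X' Y' f f' g. f \<in> Hom K X Y \<longrightarrow> f' \<in> Hom K X Y \<longrightarrow> g \<in> Hom K X' Y' \<longrightarrow>
        tenM K (madd K f f') g = madd K (tenM K f g) (tenM K f' g) \<and>
        tenM K g (madd K f f') = madd K (tenM K g f) (tenM K g f')"
    using tex unfolding tensor_exact_def by (elim conjE) assumption
  thus "f \<in> Hom K X Y \<Longrightarrow> f' \<in> Hom K X Y \<Longrightarrow> g \<in> Hom K X' Y' \<Longrightarrow> ?thesis" by blast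
qed
lemma ex_iso: "A \<in> Obj K \<Longrightarrow> X \<in> Obj K \<Longrightarrow>
        is_iso K (exL K X A) (tenO K (shO K X) A) (shO K (tenO K X A)) \<and>
        is_iso K (exR K A X) (tenO K A (shO K X)) (shO K (tenO K A X))"
proof -
  have "\<forall>A \<in> Obj K. \<forall>X \<in> Obj K.
        is_iso K (exL K X A) (tenO K (shO K X) A) (shO K (tenO K X A)) \<and>
        is_iso K (exR K A X) (tenO K A (shO K X)) (shO K (tenO K A X))"
    using tex unfolding tensor_exact_def by (elim conjE) assumption
  thus "A \<in> Obj K \<Longrightarrow> X \<in> Obj K \<Longrightarrow> ?thesis" by blast
qed
lemma dist_ten: "A \<in> Obj K \<Longrightarrow> (X,Y,Z,f,g,h) \<in> Dist K \<Longrightarrow>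
        (tenO K X A, tenO K Y A, tenO K Z A, tenM K f (idm K A), tenM K g (idm K A),
           cmp K (exL K X A) (tenM K h (idm K A))) \<in> Dist K \<and>
        (tenO K A X, tenO K A Y, tenO K A Z, tenM K (idm K A) f, tenM K (idm K A) g,
           cmp K (exR K A X) (tenM K (idm K A) h)) \<in> Dist K"
proof -
  have "\<forall>A \<in> Obj K. \<forall>X Y Z f g h. (X,Y,Z,f,g,h) \<in> Dist K \<longrightarrow>
        (tenO K X A, tenO K Y A, tenO K Z A, tenM K f (idm K A), tenM K g (idm K A),
           cmp K (exL K X A) (tenM K h (idm K A))) \<in> Dist K \<and>
        (tenO K A X, tenO K A Y, tenO K A Z, tenM K (idm K A) f, tenM K (idm K A) g,
           cmp K (exR K A X) (tenM K (idm K A) h)) \<in> Dist K"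
    using tex unfolding tensor_exact_def by (elim conjE) assumption
  thus "A \<in> Obj K \<Longrightarrow> (X,Y,Z,f,g,h) \<in> Dist K \<Longrightarrow> ?thesis" by blast
qed

lemma exfun_R: assumes B: "B \<in> Obj K" shows "exfun K (\<lambda>X. tenO K X B) (\<lambda>f. tenM K f (idm K B))"
  unfolding exfun_def
proof (intro conjI allI impI ballI)
  have iB: "idm K B \<in> Hom K B B" using id_hom B by auto
  show "tenO K X B \<in> Obj K" if "X \<in> Obj K" for X using ten_obj that B by auto
  show "tenM K f (idm K B) \<in> Hom K (tenO K X B) (tenO K Y B)" if "f \<in> Hom K X Y" for X Y f
    using tenM_hom[OF that iB] .
  show "tenM K (idm K X) (idm K B) = idm K (tenO K X B)" if "X \<in> Obj K" for X using tenM_id that B by auto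
  show "tenM K (cmp K g f) (idm K B) = cmp K (tenM K g (idm K B)) (tenM K f (idm K B))"
    if "f \<in> Hom K X Y" "g \<in> Hom K Y Z" for X Y Z f g
    using tenM_comp[OF that iB iB] id_l[OF iB] by simp
  show "tenM K (madd K f g) (idm K B) = madd K (tenM K f (idm K B)) (tenM K g (idm K B))"
    if "f \<in> Hom K X Y" "g \<in> Hom K X Y" for X Y f g using tenM_add[OF that iB] by blast
  show "isomorphic K (tenO K (shO K X) B) (shO K (tenO K X B))" if "X \<in> Obj K" for X
    using ex_iso[OF B that] is_iso_isomorphic by blast
  show "\<exists>f' g' h'. (tenO K X B, tenO K Y B, tenO K Z B, f', g', h') \<in> Dist K"
    if "(X, Y, Z, f, g, h) \<in> Dist K" for X Y Z f g h using dist_ten[OF B that] by blast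
qed

lemma exfun_L: assumes B: "B \<in> Obj K" shows "exfun K (\<lambda>X. tenO K B X) (\<lambda>f. tenM K (idm K B) f)"
  unfolding exfun_def
proof (intro conjI allI impI ballI)
  have iB: "idm K B \<in> Hom K B B" using id_hom B by auto
  show "tenO K B X \<in> Obj K" if "X \<in> Obj K" for X using ten_obj that B by auto
  show "tenM K (idm K B) f \<in> Hom K (tenO K B X) (tenO K B Y)" if "f \<in> Hom K X Y" for X Y f
    using tenM_hom[OF iB that] .
  show "tenM K (idm K B) (idm K X) = idm K (tenO K B X)" if "X \<in> Obj K" for X using tenM_id that B by auto
  show "tenM K (idm K B) (cmp K g f) = cmp K (tenM K (idm K B) g) (tenM K (idm K B) f)"
    if "f \<in> Hom K X Y" "g \<in> Hom K Y Z" for X Y Z f g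
    using tenM_comp[OF iB iB that] id_l[OF iB] by simp
  show "tenM K (idm K B) (madd K f g) = madd K (tenM K (idm K B) f) (tenM K (idm K B) g)"
    if "f \<in> Hom K X Y" "g \<in> Hom K X Y" for X Y f g using tenM_add[OF that iB] by blast
  show "isomorphic K (tenO K B (shO K X)) (shO K (tenO K B X))" if "X \<in> Obj K" for X
    using ex_iso[OF B that] is_iso_isomorphic by blast
  show "\<exists>f' g' h'. (tenO K B X, tenO K B Y, tenO K B Z, f', g', h') \<in> Dist K"
    if "(X, Y, Z, f, g, h) \<in> Dist K" for X Y Z f g h using dist_ten[OF B that] by blast
qed

end



context M begin

lemma exfun_parts: assumes "exfun K F Fm" shows
  "\<And>X. X \<in> Obj K \<Longrightarrow> F X \<in> Obj K"
  "\<And>X Y f. f \<in> Hom K X Y \<Longrightarrow> Fm f \<in> Hom K (F X) (F Y)"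
  "\<And>X. X \<in> Obj K \<Longrightarrow> Fm (idm K X) = idm K (F X)"
  "\<And>X Y Z f g. f \<in> Hom K X Y \<Longrightarrow> g \<in> Hom K Y Z \<Longrightarrow> Fm (cmp K g f) = cmp K (Fm g) (Fm f)"
  "\<And>X Y f g. f \<in> Hom K X Y \<Longrightarrow> g \<in> Hom K X Y \<Longrightarrow> Fm (madd K f g) = madd K (Fm f) (Fm g)"
  "\<And>X. X \<in> Obj K \<Longrightarrow> isomorphic K (F (shO K X)) (shO K (F X))"
  "\<And>X Y Z f g h. (X,Y,Z,f,g,h) \<in> Dist K \<Longrightarrow> (\<exists>f' g' h'. (F X, F Y, F Z, f', g', h') \<in> Dist K)"
proof -
  note A = assms[unfolded exfun_def]
  show "\<And>X. X \<in> Obj K \<Longrightarrow> F X \<in> Obj K" using conjunct1[OF A] by blast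
  show "\<And>X Y f. f \<in> Hom K X Y \<Longrightarrow> Fm f \<in> Hom K (F X) (F Y)" using conjunct1[OF conjunct2[OF A]] by blast
  show "\<And>X. X \<in> Obj K \<Longrightarrow> Fm (idm K X) = idm K (F X)" using conjunct1[OF conjunct2[OF conjunct2[OF A]]] by blast
  show "\<And>X Y Z f g. f \<in> Hom K X Y \<Longrightarrow> g \<in> Hom K Y Z \<Longrightarrow> Fm (cmp K g f) = cmp K (Fm g) (Fm f)" using conjunct1[OF conjunct2[OF conjunct2[OF conjunct2[OF A]]]] by blast
  show "\<And>X Y f g. f \<in> Hom K X Y \<Longrightarrow> g \<in> Hom K X Y \<Longrightarrow> Fm (madd K f g) = madd K (Fm f) (Fm g)" using conjunct1[OF conjunct2[OF conjunct2[OF conjunct2[OF conjunct2[OF A]]]]] by blast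
  show "\<And>X. X \<in> Obj K \<Longrightarrow> isomorphic K (F (shO K X)) (shO K (F X))" using conjunct1[OF conjunct2[OF conjunct2[OF conjunct2[OF conjunct2[OF conjunct2[OF A]]]]]] by blast
  show "\<And>X Y Z f g h. (X,Y,Z,f,g,h) \<in> Dist K \<Longrightarrow> (\<exists>f' g' h'. (F X, F Y, F Z, f', g', h') \<in> Dist K)" using conjunct2[OF conjunct2[OF conjunct2[OF conjunct2[OF conjunct2[OF conjunct2[OF A]]]]]] by blast
qed

lemma exfun_zero_map: assumes E: "exfun K F Fm" and X: "X \<in> Obj K" and Y: "Y \<in> Obj K"
  shows "Fm (mzero K X Y) = mzero K (F X) (F Y)"
proof -
  have z: "mzero K X Y \<in> Hom K X Y" using zero_hom X Y by auto
  have h: "Fm (mzero K X Y) \<in> Hom K (F X) (F Y)" using exfun_parts(2)[OF E z] .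
  have "Fm (mzero K X Y) = Fm (madd K (mzero K X Y) (mzero K X Y))" using zz X Y by simp
  also have "\<dots> = madd K (Fm (mzero K X Y)) (Fm (mzero K X Y))" using exfun_parts(5)[OF E z z] .
  finally show ?thesis using cancel[OF h] by simp
qed

lemma exfun_zero_obj: assumes E: "exfun K F Fm" and Z: "is_zero_obj K Z" shows "is_zero_obj K (F Z)"
proof -
  have Zo: "Z \<in> Obj K" using Z unfolding is_zero_obj_def by auto
  have "idm K (F Z) = Fm (idm K Z)" using exfun_parts(3)[OF E Zo] by simp
  also have "\<dots> = mzero K (F Z) (F Z)" using zero_id[OF Z] exfun_zero_map[OF E Zo Zo] by simp
  finally show ?thesis using id_zero exfun_parts(1)[OF E Zo] by blast
qed

lemma exfun_is_iso: assumes E: "exfun K F Fm" and f: "is_iso K f X Y" shows "is_iso K (Fm f) (F X) (F Y)"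
proof -
  obtain g where fh: "f \<in> Hom K X Y" and g: "g \<in> Hom K Y X" and e1: "cmp K g f = idm K X"
    and e2: "cmp K f g = idm K Y" using f unfolding is_iso_def by blast
  have X: "X \<in> Obj K" and Y: "Y \<in> Obj K" using hom_obj[OF fh] by auto
  have "cmp K (Fm g) (Fm f) = idm K (F X)" using exfun_parts(4)[OF E fh g] e1 exfun_parts(3)[OF E X] by simp
  moreover have "cmp K (Fm f) (Fm g) = idm K (F Y)" using exfun_parts(4)[OF E g fh] e2 exfun_parts(3)[OF E Y] by simp
  ultimately show ?thesis unfolding is_iso_def using exfun_parts(2)[OF E fh] exfun_parts(2)[OF E g] by blast
qed

lemma exfun_iso: assumes E: "exfun K F Fm" and i: "isomorphic K X Y" shows "isomorphic K (F X) (F Y)"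
  using i exfun_is_iso[OF E] is_iso_isomorphic unfolding isomorphic_def by blast

lemma exfun_biprod: assumes E: "exfun K F Fm" and b: "is_biproduct K A B S i1 i2 p1 p2"
  shows "is_biproduct K (F A) (F B) (F S) (Fm i1) (Fm i2) (Fm p1) (Fm p2)"
proof -
  note b' = b[unfolded is_biproduct_def]
  have o: "A \<in> Obj K" "B \<in> Obj K" "S \<in> Obj K" using b' by auto
  have h: "i1 \<in> Hom K A S" "i2 \<in> Hom K B S" "p1 \<in> Hom K S A" "p2 \<in> Hom K S B" using b' by auto
  note P = exfun_parts[OF E]
  have 1: "cmp K (Fm p1) (Fm i1) = idm K (F A)" using P(4)[OF h(1) h(3)] P(3)[OF o(1)] b' by simp
  have 2: "cmp K (Fm p2) (Fm i2) = idm K (F B)" using P(4)[OF h(2) h(4)] P(3)[OF o(2)] b' by simp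
  have 3: "cmp K (Fm p2) (Fm i1) = mzero K (F A) (F B)" using P(4)[OF h(1) h(4)] exfun_zero_map[OF E o(1) o(2)] b' by simp
  have 4: "cmp K (Fm p1) (Fm i2) = mzero K (F B) (F A)" using P(4)[OF h(2) h(3)] exfun_zero_map[OF E o(2) o(1)] b' by simp
  have 5: "madd K (cmp K (Fm i1) (Fm p1)) (cmp K (Fm i2) (Fm p2)) = idm K (F S)"
    using P(4)[OF h(3) h(1)] P(4)[OF h(4) h(2)] P(5)[OF comp_hom[OF h(3) h(1)] comp_hom[OF h(4) h(2)]]
      P(3)[OF o(3)] b' by simp
  show ?thesis unfolding is_biproduct_def using 1 2 3 4 5 P(1) o P(2) h by simp
qed

lemma ts_parts: assumes "thick_sub K P" shows
  "P \<subseteq> Obj K" "\<exists>Z \<in> P. is_zero_obj K Z"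
  "\<And>X Y. X \<in> P \<Longrightarrow> isomorphic K X Y \<Longrightarrow> Y \<in> P"
  "\<And>X. X \<in> Obj K \<Longrightarrow> X \<in> P \<longleftrightarrow> shO K X \<in> P"
  "\<And>X Y Z f g h. (X,Y,Z,f,g,h) \<in> Dist K \<Longrightarrow> X \<in> P \<Longrightarrow> Y \<in> P \<Longrightarrow> Z \<in> P"
  "\<And>A B S i1 i2 p1 p2. is_biproduct K A B S i1 i2 p1 p2 \<Longrightarrow> S \<in> P \<Longrightarrow> A \<in> P"
proof -
  note A = assms[unfolded thick_sub_def]
  show "P \<subseteq> Obj K" "\<exists>Z \<in> P. is_zero_obj K Z" using A by blast+
  show "\<And>X Y. X \<in> P \<Longrightarrow> isomorphic K X Y \<Longrightarrow> Y \<in> P" using A by blast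
  show "\<And>X. X \<in> Obj K \<Longrightarrow> X \<in> P \<longleftrightarrow> shO K X \<in> P" using A by blast
  show "\<And>X Y Z f g h. (X,Y,Z,f,g,h) \<in> Dist K \<Longrightarrow> X \<in> P \<Longrightarrow> Y \<in> P \<Longrightarrow> Z \<in> P" using A by blast
  show "\<And>A B S i1 i2 p1 p2. is_biproduct K A B S i1 i2 p1 p2 \<Longrightarrow> S \<in> P \<Longrightarrow> A \<in> P" using A by blast
qed

lemma ts_zero: assumes T: "thick_sub K P" and Z: "is_zero_obj K Z" shows "Z \<in> P"
  using ts_parts(2)[OF T] ts_parts(3)[OF T] zeros_iso Z by blast

lemma ts_iso2: "thick_sub K P \<Longrightarrow> isomorphic K X Y \<Longrightarrow> Y \<in> P \<Longrightarrow> X \<in> P"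
  using ts_parts(3) iso_sym by blast

lemma pre_thick: assumes T: "thick_sub K P" and E: "exfun K F Fm" shows "thick_sub K {X \<in> Obj K. F X \<in> P}"
proof -
  note P = exfun_parts[OF E]
  note Tp = ts_parts[OF T]
  obtain Z where Z: "is_zero_obj K Z" using ex_zero by blast
  have Zo: "Z \<in> Obj K" using Z unfolding is_zero_obj_def by auto
  have "F Z \<in> P" using ts_zero[OF T exfun_zero_obj[OF E Z]] .
  hence 1: "\<exists>Z \<in> {X \<in> Obj K. F X \<in> P}. is_zero_obj K Z" using Z Zo by blast
  have 2: "Y \<in> {X \<in> Obj K. F X \<in> P}" if "X \<in> {X \<in> Obj K. F X \<in> P}" "isomorphic K X Y" for X Y
    using that Tp(3) exfun_iso[OF E] unfolding isomorphic_def by blast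
  have 3: "X \<in> {X \<in> Obj K. F X \<in> P} \<longleftrightarrow> shO K X \<in> {X \<in> Obj K. F X \<in> P}" if X: "X \<in> Obj K" for X
  proof -
    have "F X \<in> P \<longleftrightarrow> shO K (F X) \<in> P" using Tp(4) P(1) X by blast
    also have "\<dots> \<longleftrightarrow> F (shO K X) \<in> P" using P(6)[OF X] Tp(3) ts_iso2[OF T] by blast
    finally show ?thesis using X sh_obj by blast
  qed
  have 4: "Z \<in> {X \<in> Obj K. F X \<in> P}" if D: "(X,Y,Z,f,g,h) \<in> Dist K" and
     "X \<in> {X \<in> Obj K. F X \<in> P}" "Y \<in> {X \<in> Obj K. F X \<in> P}" for X Y Z f g h
  proof -
    have "Z \<in> Obj K" using dist_typed[OF D] hom_obj by blast
    moreover obtain f' g' h' where "(F X, F Y, F Z, f', g', h') \<in> Dist K" using P(7)[OF D] by blast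
    ultimately show ?thesis using Tp(5) that by blast
  qed
  have 5: "A \<in> {X \<in> Obj K. F X \<in> P}" if "is_biproduct K A B S i1 i2 p1 p2" "S \<in> {X \<in> Obj K. F X \<in> P}"
    for A B S i1 i2 p1 p2
    using exfun_biprod[OF E that(1)] Tp(6) that unfolding is_biproduct_def by blast
  show ?thesis unfolding thick_sub_def using 1 2 3 4 5 by blast
qed

lemma inter_thick: assumes T: "\<And>i. i \<in> I \<Longrightarrow> thick_sub K (Q i)"
  shows "thick_sub K {X \<in> Obj K. \<forall>i\<in>I. X \<in> Q i}"
proof -
  obtain Z where Z: "is_zero_obj K Z" using ex_zero by blast
  have Zo: "Z \<in> Obj K" using Z unfolding is_zero_obj_def by auto
  have 1: "\<exists>Z \<in> {X \<in> Obj K. \<forall>i\<in>I. X \<in> Q i}. is_zero_obj K Z" using Z Zo ts_zero[OF T] by blast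
  have 2: "Y \<in> {X \<in> Obj K. \<forall>i\<in>I. X \<in> Q i}" if "X \<in> {X \<in> Obj K. \<forall>i\<in>I. X \<in> Q i}" "isomorphic K X Y" for X Y
    using that ts_parts(3)[OF T] unfolding isomorphic_def by blast
  have 3: "X \<in> {X \<in> Obj K. \<forall>i\<in>I. X \<in> Q i} \<longleftrightarrow> shO K X \<in> {X \<in> Obj K. \<forall>i\<in>I. X \<in> Q i}" if X: "X \<in> Obj K" for X
    using ts_parts(4)[OF T X] X sh_obj by blast
  have 4: "Z \<in> {X \<in> Obj K. \<forall>i\<in>I. X \<in> Q i}" if D: "(X,Y,Z,f,g,h) \<in> Dist K" and
     "X \<in> {X \<in> Obj K. \<forall>i\<in>I. X \<in> Q i}" "Y \<in> {X \<in> Obj K. \<forall>i\<in>I. X \<in> Q i}" for X Y Z f g h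
  proof -
    have "Z \<in> Obj K" using dist_typed[OF D] hom_obj by blast
    thus ?thesis using ts_parts(5)[OF T D] that by blast
  qed
  have 5: "A \<in> {X \<in> Obj K. \<forall>i\<in>I. X \<in> Q i}" if "is_biproduct K A B S i1 i2 p1 p2" "S \<in> {X \<in> Obj K. \<forall>i\<in>I. X \<in> Q i}"
    for A B S i1 i2 p1 p2
    using ts_parts(6)[OF T that(1)] that unfolding is_biproduct_def by blast
  show ?thesis unfolding thick_sub_def using 1 2 3 4 5 by blast
qed

end



context M begin

lemma ti_sub: "thick_ideal K P \<Longrightarrow> thick_sub K P" unfolding thick_ideal_sub by (rule conjunct1)
lemma ti_ten: "thick_ideal K P \<Longrightarrow> A \<in> P \<Longrightarrow> B \<in> Obj K \<Longrightarrow> tenO K A B \<in> P \<and> tenO K B A \<in> P"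
  unfolding thick_ideal_sub by blast
lemma ti_obj: "thick_ideal K P \<Longrightarrow> X \<in> P \<Longrightarrow> X \<in> Obj K" using ts_parts(1)[OF ti_sub] by blast
lemma ti_tenR: "thick_ideal K P \<Longrightarrow> A \<in> P \<Longrightarrow> B \<in> Obj K \<Longrightarrow> tenO K A B \<in> P" using ti_ten by blast
lemma ti_tenL: "thick_ideal K P \<Longrightarrow> A \<in> P \<Longrightarrow> B \<in> Obj K \<Longrightarrow> tenO K B A \<in> P" using ti_ten by blast
lemma ti_iso: "thick_ideal K P \<Longrightarrow> isomorphic K X Y \<Longrightarrow> X \<in> P \<Longrightarrow> Y \<in> P" using ts_parts(3)[OF ti_sub] by blast
lemma ti_iso2: "thick_ideal K P \<Longrightarrow> isomorphic K X Y \<Longrightarrow> Y \<in> P \<Longrightarrow> X \<in> P" using ts_iso2[OF ti_sub] by blast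

lemma asc_isom: "A \<in> Obj K \<Longrightarrow> B \<in> Obj K \<Longrightarrow> C \<in> Obj K \<Longrightarrow>
   isomorphic K (tenO K (tenO K A B) C) (tenO K A (tenO K B C))"
  using asc_iso is_iso_isomorphic by blast

lemma isoL: "W \<in> Obj K \<Longrightarrow> isomorphic K X Y \<Longrightarrow> isomorphic K (tenO K W X) (tenO K W Y)"
  using exfun_iso[OF exfun_L] by simp
lemma isoR: "W \<in> Obj K \<Longrightarrow> isomorphic K X Y \<Longrightarrow> isomorphic K (tenO K X W) (tenO K Y W)"
  using exfun_iso[OF exfun_R] by simp

lemma Zs_ideal: "thick_ideal K {X \<in> Obj K. is_zero_obj K X}"
  unfolding thick_ideal_sub thick_sub_def
proof (intro conjI allI impI ballI)
  show "{X \<in> Obj K. is_zero_obj K X} \<subseteq> Obj K" by blast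
  show "\<exists>Z\<in>{X \<in> Obj K. is_zero_obj K X}. is_zero_obj K Z" using ex_zero unfolding is_zero_obj_def by blast
  show "Y \<in> {X \<in> Obj K. is_zero_obj K X}" if "X \<in> {X \<in> Obj K. is_zero_obj K X}" "isomorphic K X Y" for X Y
    using that zero_iso_closed unfolding isomorphic_def by blast
  show "X \<in> {X \<in> Obj K. is_zero_obj K X} \<longleftrightarrow> shO K X \<in> {X \<in> Obj K. is_zero_obj K X}" if "X \<in> Obj K" for X
    using that shift_zero1 shift_zero2 sh_obj by blast
  show "Z \<in> {X \<in> Obj K. is_zero_obj K X}" if "(X, Y, Z, f, g, h) \<in> Dist K"
    "X \<in> {X \<in> Obj K. is_zero_obj K X}" "Y \<in> {X \<in> Obj K. is_zero_obj K X}" for X Y Z f g h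
    using dist_zero that unfolding is_zero_obj_def by blast
  show "A \<in> {X \<in> Obj K. is_zero_obj K X}" if b: "is_biproduct K A B S i1 i2 p1 p2"
    "S \<in> {X \<in> Obj K. is_zero_obj K X}" for A B S i1 i2 p1 p2
  proof -
    have A: "A \<in> Obj K" and i: "i1 \<in> Hom K A S" and p: "p1 \<in> Hom K S A" and e: "cmp K p1 i1 = idm K A"
      using b(1) unfolding is_biproduct_def by auto
    have "p1 = mzero K S A" using zero_homL p b(2) by blast
    hence "idm K A = mzero K A A" using e comp_zero_l[OF i A] by simp
    thus ?thesis using id_zero A by blast
  qed
  show "tenO K A B \<in> {X \<in> Obj K. is_zero_obj K X}" if "A \<in> {X \<in> Obj K. is_zero_obj K X}" "B \<in> Obj K" for A B
    using exfun_zero_obj[OF exfun_R[OF that(2)]] that unfolding is_zero_obj_def by blast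
  show "tenO K B A \<in> {X \<in> Obj K. is_zero_obj K X}" if "A \<in> {X \<in> Obj K. is_zero_obj K X}" "B \<in> Obj K" for A B
    using exfun_zero_obj[OF exfun_L[OF that(2)]] that unfolding is_zero_obj_def by blast
qed

lemma chain_ideal: assumes ne: "CC \<noteq> {}" and T: "\<And>P. P \<in> CC \<Longrightarrow> thick_ideal K P"
  and ch: "\<And>P Q. P \<in> CC \<Longrightarrow> Q \<in> CC \<Longrightarrow> P \<subseteq> Q \<or> Q \<subseteq> P"
  shows "thick_ideal K (\<Union>CC)"
  unfolding thick_ideal_sub thick_sub_def
proof (intro conjI allI impI ballI)
  show "\<Union>CC \<subseteq> Obj K" using T ti_obj by blast
  show "\<exists>Z\<in>\<Union>CC. is_zero_obj K Z"
  proof -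
    obtain P where P: "P \<in> CC" using ne by blast
    obtain Z where "Z \<in> P" "is_zero_obj K Z" using ts_parts(2)[OF ti_sub[OF T[OF P]]] by blast
    thus ?thesis using P by blast
  qed
  show "Y \<in> \<Union>CC" if "X \<in> \<Union>CC" "isomorphic K X Y" for X Y using that T ti_iso by blast
  show "X \<in> \<Union>CC \<longleftrightarrow> shO K X \<in> \<Union>CC" if XO: "X \<in> Obj K" for X
  proof
    assume "X \<in> \<Union>CC" then obtain P where "P \<in> CC" "X \<in> P" by blast
    thus "shO K X \<in> \<Union>CC" using ts_parts(4)[OF ti_sub[OF T] XO] by blast
  next
    assume "shO K X \<in> \<Union>CC" then obtain P where "P \<in> CC" "shO K X \<in> P" by blast
    thus "X \<in> \<Union>CC" using ts_parts(4)[OF ti_sub[OF T] XO] by blast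
  qed
  show "Z \<in> \<Union>CC" if D: "(X, Y, Z, f, g, h) \<in> Dist K" "X \<in> \<Union>CC" "Y \<in> \<Union>CC" for X Y Z f g h
  proof -
    obtain P Q where "P \<in> CC" "Q \<in> CC" "X \<in> P" "Y \<in> Q" using D by blast
    moreover have "Z \<in> R" if "R \<in> CC" "X \<in> R" "Y \<in> R" for R using ts_parts(5)[OF ti_sub[OF T] D(1)] that by blast
    ultimately show ?thesis using ch by blast
  qed
  show "A \<in> \<Union>CC" if bp: "is_biproduct K A B S i1 i2 p1 p2" "S \<in> \<Union>CC" for A B S i1 i2 p1 p2
  proof -
    obtain P where "P \<in> CC" "S \<in> P" using bp by blast
    thus ?thesis using ts_parts(6)[OF ti_sub[OF T] bp(1)] by blast
  qed
  show "tenO K A B \<in> \<Union>CC" if "A \<in> \<Union>CC" "B \<in> Obj K" for A B using that T ti_tenR by blast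
  show "tenO K B A \<in> \<Union>CC" if "A \<in> \<Union>CC" "B \<in> Obj K" for A B using that T ti_tenL by blast
qed

lemma tpow_obj: "A \<in> Obj K \<Longrightarrow> tpow K A n \<in> Obj K"
  by (induction n) (auto simp: unit_obj ten_obj)

lemma tpow_add: assumes A: "A \<in> Obj K"
  shows "isomorphic K (tenO K (tpow K A n) (tpow K A m)) (tpow K A (n + m))"
proof (induction n)
  case 0
  then show ?case using is_iso_isomorphic[OF lun_iso[OF tpow_obj[OF A]]] by simp
next
  case (Suc n)
  have "isomorphic K (tenO K (tenO K A (tpow K A n)) (tpow K A m)) (tenO K A (tenO K (tpow K A n) (tpow K A m)))"
    using asc_isom A tpow_obj by blast
  moreover have "isomorphic K (tenO K A (tenO K (tpow K A n) (tpow K A m))) (tenO K A (tpow K A (n+m)))"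
    using isoL[OF A Suc] .
  ultimately show ?case using iso_trans by simp
qed

end



context M begin

lemma Qr_ideal: assumes P: "thick_ideal K P" and J: "J \<subseteq> Obj K"
  and Jc: "\<And>Y C. Y \<in> J \<Longrightarrow> C \<in> Obj K \<Longrightarrow> tenO K C Y \<in> J"
  shows "thick_ideal K {X \<in> Obj K. \<forall>Y\<in>J. tenO K X Y \<in> P}"
proof -
  have ts: "thick_sub K {X \<in> Obj K. \<forall>Y\<in>J. X \<in> {X \<in> Obj K. tenO K X Y \<in> P}}"
  proof (rule inter_thick)
    fix Y assume "Y \<in> J"
    hence "Y \<in> Obj K" using J by blast
    thus "thick_sub K {X \<in> Obj K. tenO K X Y \<in> P}" using pre_thick[OF ti_sub[OF P] exfun_R] by simp
  qed
  have eq: "{X \<in> Obj K. \<forall>Y\<in>J. X \<in> {X \<in> Obj K. tenO K X Y \<in> P}} = {X \<in> Obj K. \<forall>Y\<in>J. tenO K X Y \<in> P}" by blast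
  have id: "\<forall>A \<in> {X \<in> Obj K. \<forall>Y\<in>J. tenO K X Y \<in> P}. \<forall>B \<in> Obj K.
      tenO K A B \<in> {X \<in> Obj K. \<forall>Y\<in>J. tenO K X Y \<in> P} \<and> tenO K B A \<in> {X \<in> Obj K. \<forall>Y\<in>J. tenO K X Y \<in> P}"
  proof (intro ballI conjI)
    fix X C assume X: "X \<in> {X \<in> Obj K. \<forall>Y\<in>J. tenO K X Y \<in> P}" and C: "C \<in> Obj K"
    have Xo: "X \<in> Obj K" using X by blast
    have o: "tenO K X C \<in> Obj K" "tenO K C X \<in> Obj K" using ten_obj Xo C by auto
    have 1: "\<forall>Y\<in>J. tenO K (tenO K X C) Y \<in> P"
    proof
      fix Y assume Y: "Y \<in> J"
      have Yo: "Y \<in> Obj K" using Y J by blast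
      have "tenO K X (tenO K C Y) \<in> P" using X Jc[OF Y C] by blast
      thus "tenO K (tenO K X C) Y \<in> P" using ti_iso2[OF P asc_isom[OF Xo C Yo]] by blast
    qed
    have 2: "\<forall>Y\<in>J. tenO K (tenO K C X) Y \<in> P"
    proof
      fix Y assume Y: "Y \<in> J"
      have Yo: "Y \<in> Obj K" using Y J by blast
      have "tenO K C (tenO K X Y) \<in> P" using X Y ti_tenL[OF P _ C] by blast
      thus "tenO K (tenO K C X) Y \<in> P" using ti_iso2[OF P asc_isom[OF C Xo Yo]] by blast
    qed
    show "tenO K X C \<in> {X \<in> Obj K. \<forall>Y\<in>J. tenO K X Y \<in> P}" using o 1 by blast
    show "tenO K C X \<in> {X \<in> Obj K. \<forall>Y\<in>J. tenO K X Y \<in> P}" using o 2 by blast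
  qed
  show ?thesis unfolding thick_ideal_sub using ts eq id by simp
qed

lemma Ql_ideal: assumes P: "thick_ideal K P" and I: "I \<subseteq> Obj K"
  and Ic: "\<And>X C. X \<in> I \<Longrightarrow> C \<in> Obj K \<Longrightarrow> tenO K X C \<in> I"
  shows "thick_ideal K {Y \<in> Obj K. \<forall>X\<in>I. tenO K X Y \<in> P}"
proof -
  have ts: "thick_sub K {Y \<in> Obj K. \<forall>X\<in>I. Y \<in> {Y \<in> Obj K. tenO K X Y \<in> P}}"
  proof (rule inter_thick)
    fix X assume "X \<in> I"
    hence "X \<in> Obj K" using I by blast
    thus "thick_sub K {Y \<in> Obj K. tenO K X Y \<in> P}" using pre_thick[OF ti_sub[OF P] exfun_L] by simp
  qed
  have eq: "{Y \<in> Obj K. \<forall>X\<in>I. Y \<in> {Y \<in> Obj K. tenO K X Y \<in> P}} = {Y \<in> Obj K. \<forall>X\<in>I. tenO K X Y \<in> P}" by blast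
  have id: "\<forall>A \<in> {Y \<in> Obj K. \<forall>X\<in>I. tenO K X Y \<in> P}. \<forall>B \<in> Obj K.
      tenO K A B \<in> {Y \<in> Obj K. \<forall>X\<in>I. tenO K X Y \<in> P} \<and> tenO K B A \<in> {Y \<in> Obj K. \<forall>X\<in>I. tenO K X Y \<in> P}"
  proof (intro ballI conjI)
    fix Y D assume Y: "Y \<in> {Y \<in> Obj K. \<forall>X\<in>I. tenO K X Y \<in> P}" and D: "D \<in> Obj K"
    have Yo: "Y \<in> Obj K" using Y by blast
    have o: "tenO K Y D \<in> Obj K" "tenO K D Y \<in> Obj K" using ten_obj Yo D by auto
    have 1: "\<forall>X\<in>I. tenO K X (tenO K Y D) \<in> P"
    proof
      fix X assume X: "X \<in> I"
      have Xo: "X \<in> Obj K" using X I by blast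
      have "tenO K (tenO K X Y) D \<in> P" using X Y ti_tenR[OF P _ D] by blast
      thus "tenO K X (tenO K Y D) \<in> P" using ti_iso[OF P asc_isom[OF Xo Yo D]] by blast
    qed
    have 2: "\<forall>X\<in>I. tenO K X (tenO K D Y) \<in> P"
    proof
      fix X assume X: "X \<in> I"
      have Xo: "X \<in> Obj K" using X I by blast
      have "tenO K (tenO K X D) Y \<in> P" using Y Ic[OF X D] by blast
      thus "tenO K X (tenO K D Y) \<in> P" using ti_iso[OF P asc_isom[OF Xo D Yo]] by blast
    qed
    show "tenO K Y D \<in> {Y \<in> Obj K. \<forall>X\<in>I. tenO K X Y \<in> P}" using o 1 by blast
    show "tenO K D Y \<in> {Y \<in> Obj K. \<forall>X\<in>I. tenO K X Y \<in> P}" using o 2 by blast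
  qed
  show ?thesis unfolding thick_ideal_sub using ts eq id by simp
qed

lemma R_ideal: assumes P: "thick_ideal K P" and W: "W \<in> Obj K"
  shows "thick_ideal K {Y \<in> Obj K. \<forall>C\<in>Obj K. tenO K W (tenO K C Y) \<in> P}"
proof -
  have P1: "thick_sub K {V \<in> Obj K. tenO K W V \<in> P}" using pre_thick[OF ti_sub[OF P] exfun_L[OF W]] by simp
  have ts: "thick_sub K {Y \<in> Obj K. \<forall>C\<in>Obj K. Y \<in> {Y \<in> Obj K. tenO K C Y \<in> {V \<in> Obj K. tenO K W V \<in> P}}}"
  proof (rule inter_thick)
    fix C assume "C \<in> Obj K"
    thus "thick_sub K {Y \<in> Obj K. tenO K C Y \<in> {V \<in> Obj K. tenO K W V \<in> P}}"
      using pre_thick[OF P1 exfun_L] by simp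
  qed
  have eq: "{Y \<in> Obj K. \<forall>C\<in>Obj K. Y \<in> {Y \<in> Obj K. tenO K C Y \<in> {V \<in> Obj K. tenO K W V \<in> P}}}
     = {Y \<in> Obj K. \<forall>C\<in>Obj K. tenO K W (tenO K C Y) \<in> P}" using ten_obj by blast
  have id: "\<forall>A \<in> {Y \<in> Obj K. \<forall>C\<in>Obj K. tenO K W (tenO K C Y) \<in> P}. \<forall>B \<in> Obj K.
      tenO K A B \<in> {Y \<in> Obj K. \<forall>C\<in>Obj K. tenO K W (tenO K C Y) \<in> P} \<and>
      tenO K B A \<in> {Y \<in> Obj K. \<forall>C\<in>Obj K. tenO K W (tenO K C Y) \<in> P}"
  proof (intro ballI conjI)
    fix Y D assume Y: "Y \<in> {Y \<in> Obj K. \<forall>C\<in>Obj K. tenO K W (tenO K C Y) \<in> P}" and D: "D \<in> Obj K"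
    have Yo: "Y \<in> Obj K" using Y by blast
    have o: "tenO K Y D \<in> Obj K" "tenO K D Y \<in> Obj K" using ten_obj Yo D by auto
    have 1: "\<forall>C\<in>Obj K. tenO K W (tenO K C (tenO K Y D)) \<in> P"
    proof
      fix C assume C: "C \<in> Obj K"
      have CY: "tenO K C Y \<in> Obj K" using ten_obj C Yo by auto
      have "tenO K (tenO K W (tenO K C Y)) D \<in> P" using Y C ti_tenR[OF P _ D] by blast
      hence "tenO K W (tenO K (tenO K C Y) D) \<in> P" using ti_iso[OF P asc_isom[OF W CY D]] by blast
      moreover have "isomorphic K (tenO K W (tenO K C (tenO K Y D))) (tenO K W (tenO K (tenO K C Y) D))"
        using isoL[OF W iso_sym[OF asc_isom[OF C Yo D]]] .
      ultimately show "tenO K W (tenO K C (tenO K Y D)) \<in> P" using ti_iso2[OF P] by blast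
    qed
    have 2: "\<forall>C\<in>Obj K. tenO K W (tenO K C (tenO K D Y)) \<in> P"
    proof
      fix C assume C: "C \<in> Obj K"
      have CD: "tenO K C D \<in> Obj K" using ten_obj C D by auto
      have "tenO K W (tenO K (tenO K C D) Y) \<in> P" using Y CD by blast
      moreover have "isomorphic K (tenO K W (tenO K C (tenO K D Y))) (tenO K W (tenO K (tenO K C D) Y))"
        using isoL[OF W iso_sym[OF asc_isom[OF C D Yo]]] .
      ultimately show "tenO K W (tenO K C (tenO K D Y)) \<in> P" using ti_iso2[OF P] by blast
    qed
    show "tenO K Y D \<in> {Y \<in> Obj K. \<forall>C\<in>Obj K. tenO K W (tenO K C Y) \<in> P}" using o 1 by blast
    show "tenO K D Y \<in> {Y \<in> Obj K. \<forall>C\<in>Obj K. tenO K W (tenO K C Y) \<in> P}" using o 2 by blast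
  qed
  show ?thesis unfolding thick_ideal_sub using ts eq id by simp
qed

end



context M begin

lemma max_prime: assumes A: "A \<in> Obj K" and P: "thick_ideal K P"
  and disj: "\<And>n. n \<ge> 1 \<Longrightarrow> tpow K A n \<notin> P"
  and mx: "\<And>Q. thick_ideal K Q \<Longrightarrow> (\<forall>n\<ge>1. tpow K A n \<notin> Q) \<Longrightarrow> P \<subseteq> Q \<Longrightarrow> Q = P"
  shows "prime_ideal K P" and "A \<notin> P"
proof -
  show AP: "A \<notin> P"
  proof
    assume "A \<in> P"
    hence "tpow K A 1 \<in> P" using ti_tenR[OF P _ unit_obj] by simp
    thus False using disj[of 1] by simp
  qed
  have ne: "P \<noteq> Obj K" using A AP by blast
  have pr: "I \<subseteq> P \<or> J \<subseteq> P" if I: "thick_ideal K I" and J: "thick_ideal K J" and IJ: "ideal_tensor K I J \<subseteq> P" for I J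
  proof (rule ccontr)
    assume nn: "\<not> (I \<subseteq> P \<or> J \<subseteq> P)"
    define Q where "Q = {X \<in> Obj K. \<forall>Y\<in>J. tenO K X Y \<in> P}"
    have Jo: "J \<subseteq> Obj K" using ti_obj[OF J] by blast
    have Qi: "thick_ideal K Q" unfolding Q_def using Qr_ideal[OF P Jo ti_tenL[OF J]] .
    have PQ: "P \<subseteq> Q"
    proof
      fix X assume X: "X \<in> P"
      have "tenO K X Y \<in> P" if "Y \<in> J" for Y using ti_tenR[OF P X] Jo that by blast
      thus "X \<in> Q" unfolding Q_def using ti_obj[OF P X] by blast
    qed
    have IQ: "I \<subseteq> Q"
    proof
      fix X assume X: "X \<in> I"
      have "tenO K X Y \<in> P" if "Y \<in> J" for Y using IJ X that unfolding ideal_tensor_def by blast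
      thus "X \<in> Q" unfolding Q_def using ti_obj[OF I X] by blast
    qed
    have "Q \<noteq> P" using IQ nn by blast
    then obtain n where n: "n \<ge> 1" "tpow K A n \<in> Q" using mx[OF Qi _ PQ] by blast
    have An: "tpow K A n \<in> Obj K" using tpow_obj A by blast
    define R where "R = {Y \<in> Obj K. \<forall>C\<in>Obj K. tenO K (tpow K A n) (tenO K C Y) \<in> P}"
    have Ri: "thick_ideal K R" unfolding R_def using R_ideal[OF P An] .
    have PR: "P \<subseteq> R"
    proof
      fix Y assume Y: "Y \<in> P"
      have "tenO K (tpow K A n) (tenO K C Y) \<in> P" if C: "C \<in> Obj K" for C
        using ti_tenL[OF P ti_tenL[OF P Y C] An] .
      thus "Y \<in> R" unfolding R_def using ti_obj[OF P Y] by blast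
    qed
    have JR: "J \<subseteq> R"
    proof
      fix Y assume Y: "Y \<in> J"
      have "tenO K (tpow K A n) (tenO K C Y) \<in> P" if C: "C \<in> Obj K" for C
        using ti_tenL[OF J Y C] n(2) unfolding Q_def by blast
      thus "Y \<in> R" unfolding R_def using ti_obj[OF J Y] by blast
    qed
    have "R \<noteq> P" using JR nn by blast
    then obtain m where m: "m \<ge> 1" "tpow K A m \<in> R" using mx[OF Ri _ PR] by blast
    have Am: "tpow K A m \<in> Obj K" using tpow_obj A by blast
    have "tenO K (tpow K A n) (tenO K (unitO K) (tpow K A m)) \<in> P" using m(2) unit_obj unfolding R_def by blast
    moreover have "isomorphic K (tenO K (tpow K A n) (tenO K (unitO K) (tpow K A m))) (tenO K (tpow K A n) (tpow K A m))"
      using isoL[OF An is_iso_isomorphic[OF lun_iso[OF Am]]] .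
    ultimately have "tenO K (tpow K A n) (tpow K A m) \<in> P" using ti_iso[OF P] by blast
    hence "tpow K A (n + m) \<in> P" using ti_iso[OF P tpow_add[OF A]] by blast
    thus False using disj[of "n+m"] n by simp
  qed
  show "prime_ideal K P" unfolding prime_ideal_def using P ne pr by blast
qed

lemma rad_sub_nil: "prime_radical K \<subseteq> nilpotent_objs K"
proof
  fix A assume Ar: "A \<in> prime_radical K"
  have A: "A \<in> Obj K" using Ar unfolding prime_radical_def by blast
  show "A \<in> nilpotent_objs K"
  proof (rule ccontr)
    assume nA: "A \<notin> nilpotent_objs K"
    define Fam where "Fam = {P. thick_ideal K P \<and> (\<forall>n\<ge>1. tpow K A n \<notin> P)}"
    have Zs: "{X \<in> Obj K. is_zero_obj K X} \<in> Fam"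
    proof -
      have "tpow K A n \<notin> {X \<in> Obj K. is_zero_obj K X}" if "n \<ge> 1" for n
      proof
        assume "tpow K A n \<in> {X \<in> Obj K. is_zero_obj K X}"
        hence "is_zero_obj K (tpow K A n)" "isomorphic K (tpow K A n) (tpow K A n)" using iso_refl by auto
        thus False using nA A that unfolding nilpotent_objs_def by blast
      qed
      thus ?thesis unfolding Fam_def using Zs_ideal by blast
    qed
    have ch: "\<Union>CC \<in> Fam" if "CC \<noteq> {}" "subset.chain Fam CC" for CC
    proof -
      have sub: "CC \<subseteq> Fam" and c: "\<forall>X\<in>CC. \<forall>Y\<in>CC. X \<subseteq> Y \<or> Y \<subseteq> X" using that(2) unfolding subset_chain_def by auto
      have "thick_ideal K (\<Union>CC)" by (rule chain_ideal[OF that(1)]) (use sub c Fam_def in blast)+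
      thus ?thesis using sub unfolding Fam_def by blast
    qed
    have "\<exists>M\<in>Fam. \<forall>X\<in>Fam. M \<subseteq> X \<longrightarrow> X = M"
      by (rule subset_Zorn_nonempty) (use Zs ch in blast)+
    then obtain M where M: "M \<in> Fam" and Mx: "\<forall>X\<in>Fam. M \<subseteq> X \<longrightarrow> X = M" by blast
    have MI: "thick_ideal K M" and Md: "\<And>n. n \<ge> 1 \<Longrightarrow> tpow K A n \<notin> M" using M unfolding Fam_def by auto
    have mx: "\<And>Q. thick_ideal K Q \<Longrightarrow> (\<forall>n\<ge>1. tpow K A n \<notin> Q) \<Longrightarrow> M \<subseteq> Q \<Longrightarrow> Q = M"
      using Mx unfolding Fam_def by blast
    have "prime_ideal K M" "A \<notin> M" using max_prime[OF A MI Md mx] by blast+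
    thus False using Ar unfolding prime_radical_def by blast
  qed
qed

lemma nil_sub_cp: "nilpotent_objs K \<subseteq> cp_radical K"
proof
  fix A assume An: "A \<in> nilpotent_objs K"
  then obtain n Z where A: "A \<in> Obj K" and n: "n \<ge> 1" and Z: "is_zero_obj K Z" and i: "isomorphic K (tpow K A n) Z"
    unfolding nilpotent_objs_def by blast
  have "A \<in> P" if P: "completely_prime_ideal K P" for P
  proof -
    have PI: "thick_ideal K P" and ne: "P \<noteq> Obj K" and cp: "\<forall>A \<in> Obj K. \<forall>B \<in> Obj K. tenO K A B \<in> P \<longrightarrow> A \<in> P \<or> B \<in> P"
      using P unfolding completely_prime_ideal_def by blast+
    have u: "unitO K \<notin> P"
    proof
      assume u: "unitO K \<in> P"
      have "B \<in> P" if "B \<in> Obj K" for B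
        using ti_iso[OF PI is_iso_isomorphic[OF lun_iso[OF that]] ti_tenR[OF PI u that]] .
      thus False using ne ti_obj[OF PI] by blast
    qed
    have "\<forall>k. k \<ge> 1 \<longrightarrow> tpow K A k \<in> P \<longrightarrow> A \<in> P"
    proof
      fix k show "k \<ge> 1 \<longrightarrow> tpow K A k \<in> P \<longrightarrow> A \<in> P"
      proof (induction k)
        case 0 then show ?case by simp
      next
        case (Suc k)
        show ?case
        proof (intro impI)
          assume "tpow K A (Suc k) \<in> P"
          hence "A \<in> P \<or> tpow K A k \<in> P" using cp A tpow_obj[OF A] by simp
          moreover have "k = 0 \<Longrightarrow> tpow K A k \<notin> P" using u by simp
          ultimately show "A \<in> P" using Suc by (cases "k = 0") auto
        qed
      qed
    qed
    moreover have "tpow K A n \<in> P" using ti_iso2[OF PI i ti_sub[THEN ts_zero, OF PI Z]] .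
    ultimately show ?thesis using n by blast
  qed
  thus "A \<in> cp_radical K" unfolding cp_radical_def using A by blast
qed

lemma prime_cp: assumes br: "is_symmetric K br" and P: "prime_ideal K P" shows "completely_prime_ideal K P"
proof -
  have bri: "\<And>A B. A \<in> Obj K \<Longrightarrow> B \<in> Obj K \<Longrightarrow> isomorphic K (tenO K A B) (tenO K B A)"
    using conjunct1[OF br[unfolded is_symmetric_def]] is_iso_isomorphic by blast
  have PI: "thick_ideal K P" and ne: "P \<noteq> Obj K"
    and pr: "\<And>I J. thick_ideal K I \<Longrightarrow> thick_ideal K J \<Longrightarrow> ideal_tensor K I J \<subseteq> P \<Longrightarrow> I \<subseteq> P \<or> J \<subseteq> P"
    using P unfolding prime_ideal_def by blast+
  have "A \<in> P \<or> B \<in> P" if A: "A \<in> Obj K" and B: "B \<in> Obj K" and AB: "tenO K A B \<in> P" for A B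
  proof -
    define I where "I = {X \<in> Obj K. tenO K X B \<in> P}"
    have ts: "thick_sub K I" unfolding I_def using pre_thick[OF ti_sub[OF PI] exfun_R[OF B]] by simp
    have id: "\<forall>X \<in> I. \<forall>C \<in> Obj K. tenO K X C \<in> I \<and> tenO K C X \<in> I"
    proof (intro ballI conjI)
      fix X C assume X: "X \<in> I" and C: "C \<in> Obj K"
      have Xo: "X \<in> Obj K" and XB: "tenO K X B \<in> P" using X unfolding I_def by auto
      have "isomorphic K (tenO K (tenO K X C) B) (tenO K X (tenO K C B))" using asc_isom Xo C B by blast
      moreover have "isomorphic K (tenO K X (tenO K C B)) (tenO K X (tenO K B C))" using isoL[OF Xo bri[OF C B]] .
      moreover have "isomorphic K (tenO K X (tenO K B C)) (tenO K (tenO K X B) C)" using iso_sym[OF asc_isom[OF Xo B C]] .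
      ultimately have "isomorphic K (tenO K (tenO K X C) B) (tenO K (tenO K X B) C)" using iso_trans by blast
      moreover have "tenO K (tenO K X B) C \<in> P" using ti_tenR[OF PI XB C] .
      ultimately have "tenO K (tenO K X C) B \<in> P" using ti_iso2[OF PI] by blast
      thus "tenO K X C \<in> I" unfolding I_def using ten_obj Xo C by blast
      have "tenO K C (tenO K X B) \<in> P" using ti_tenL[OF PI XB C] .
      hence "tenO K (tenO K C X) B \<in> P" using ti_iso2[OF PI asc_isom[OF C Xo B]] by blast
      thus "tenO K C X \<in> I" unfolding I_def using ten_obj Xo C by blast
    qed
    have II: "thick_ideal K I" unfolding thick_ideal_sub using ts id by blast
    have Io: "I \<subseteq> Obj K" unfolding I_def by blast
    define J where "J = {Y \<in> Obj K. \<forall>X\<in>I. tenO K X Y \<in> P}"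
    have JI: "thick_ideal K J" unfolding J_def by (rule Ql_ideal[OF PI Io]) (use id in blast)
    have "ideal_tensor K I J \<subseteq> P" unfolding ideal_tensor_def J_def by blast
    hence "I \<subseteq> P \<or> J \<subseteq> P" using pr[OF II JI] by blast
    moreover have "A \<in> I" unfolding I_def using A AB by blast
    moreover have "B \<in> J" unfolding J_def I_def using B by blast
    ultimately show ?thesis by blast
  qed
  thus ?thesis unfolding completely_prime_ideal_def using PI ne by blast
qed

lemma cp_sub_rad: assumes br: "is_symmetric K br" shows "cp_radical K \<subseteq> prime_radical K"
  unfolding cp_radical_def prime_radical_def using prime_cp[OF br] by blast

end

theorem mainTheorem13:
  fixes K :: "('o, 'm) mdc"
  assumes "is_MDC K"
  shows "prime_radical K \<subseteq> nilpotent_objs K \<and>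
         ((\<exists>P. completely_prime_ideal K P) \<longrightarrow>
            prime_radical K \<subseteq> nilpotent_objs K \<and> nilpotent_objs K \<subseteq> cp_radical K) \<and>
         ((\<exists>br. is_symmetric K br) \<longrightarrow>
            prime_radical K = nilpotent_objs K \<and> nilpotent_objs K = cp_radical K)"
proof -
  interpret M K using assms by unfold_locales
  have a: "prime_radical K \<subseteq> nilpotent_objs K" by (rule rad_sub_nil)
  have b: "nilpotent_objs K \<subseteq> cp_radical K" by (rule nil_sub_cp)
  have c: "(\<exists>br. is_symmetric K br) \<longrightarrow> cp_radical K \<subseteq> prime_radical K" using cp_sub_rad by blast
  show ?thesis using a b c by blast
qed


end
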